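(* Let $\delta>0$, $\nu\ge\frac32+\delta$, and let $K$ be either of the following integral operators on $\mathbb R_+=(0,\infty)$, $Ku(x)=\int_0^\infty k(x,y)u(y)\,dy$: (i) $k(x,y)=\frac1{2\nu}(y/x)^{\nu}(xy)^{1/2}$ for $y\le x$ and $k(x,y)=\frac1{2\nu}(y/x)^{-\nu}(xy)^{1/2}$ for $x\le y$; or (ii) for some $\beta>0$, $k(x,y)=(xy)^{1/2}I_\nu(\beta y)K_\nu(\beta x)$ for $y\le x$ and $k(x,y)=(xy)^{1/2}I_\nu(\beta x)K_\nu(\beta y)$ for $x\le y$, with $I_\nu,K_\nu$ the modified Bessel functions. Then for every $u\in L^2(\mathbb R_+)$ with support in $[0,1]$, $Ku$ satisfies, for $x\in(0,\infty)$, \[ |Ku(x)|\le\frac C\nu\|u\|_{L^2}\,x^{-1-\delta},\qquad|(x\partial_x)Ku(x)|\le C\|u\|_{L^2}\,x^{-1-\delta}, \] with a constant $C>0$ independent of $u$ and $\nu$. *)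

theory Defs
  imports "HOL-Analysis.Analysis"
begin

definition besselI :: "real \<Rightarrow> real \<Rightarrow> real" where
  "besselI \<nu> z = (\<Sum>m. (z / 2) powr (2 * real m + \<nu>) / (fact m * Gamma (real m + \<nu> + 1)))"

text \<open>Modified Bessel function of the second kind, K_nu(z) for z > 0
  (standard integral representation, DLMF 10.32.9).\<close>
definition besselK :: "real \<Rightarrow> real \<Rightarrow> real" where
  "besselK \<nu> z = (LINT t:{0..}|lborel. exp (- z * cosh t) * cosh (\<nu> * t))"

definition kernel1 :: "real \<Rightarrow> real \<Rightarrow> real \<Rightarrow> real" where
  "kernel1 \<nu> x y =
     (if y \<le> x then 1 / (2 * \<nu>) * (y / x) powr \<nu> * sqrt (x * y)
      else 1 / (2 * \<nu>) * (y / x) powr (- \<nu>) * sqrt (x * y))"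

definition kernel2 :: "real \<Rightarrow> real \<Rightarrow> real \<Rightarrow> real \<Rightarrow> real" where
  "kernel2 \<nu> \<beta> x y =
     (if y \<le> x then sqrt (x * y) * besselI \<nu> (\<beta> * y) * besselK \<nu> (\<beta> * x)
      else sqrt (x * y) * besselI \<nu> (\<beta> * x) * besselK \<nu> (\<beta> * y))"

definition intop :: "(real \<Rightarrow> real \<Rightarrow> real) \<Rightarrow> (real \<Rightarrow> complex) \<Rightarrow> real \<Rightarrow> complex" where
  "intop k u x = (LINT y:{0<..}|lborel. complex_of_real (k x y) * u y)"

definition L2_Rplus :: "(real \<Rightarrow> complex) \<Rightarrow> bool" where
  "L2_Rplus u \<longleftrightarrow> u \<in> borel_measurable lborel \<and>
                    set_integrable lborel {0<..} (\<lambda>y. (cmod (u y))\<^sup>2)"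

definition L2norm :: "(real \<Rightarrow> complex) \<Rightarrow> real" where
  "L2norm u = sqrt (LINT y:{0<..}|lborel. (cmod (u y))\<^sup>2)"

end

theory Submission imports Defs begin


lemma vderiv_from_quot:
  fixes F :: "real \<Rightarrow> 'b::real_normed_vector"
  assumes "((\<lambda>h. (F (x+h) - F x) /\<^sub>R h) \<longlongrightarrow> D) (at 0)"
  shows "(F has_vector_derivative D) (at x)"
  unfolding has_vector_derivative_def has_derivative_at
proof (intro conjI)
  show "bounded_linear (\<lambda>h. h *\<^sub>R D)" by (rule bounded_linear_scaleR_left)
  have "((\<lambda>h. norm ((F (x+h) - F x) /\<^sub>R h - D)) \<longlongrightarrow> 0) (at 0)"
    using assms by (simp add: tendsto_norm_zero_iff LIM_zero_iff)
  moreover have "\<forall>\<^sub>F h in at 0. norm ((F (x+h) - F x) /\<^sub>R h - D) = norm (F (x + h) - F x - h *\<^sub>R D) / norm h"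
    unfolding eventually_at_filter
  proof (intro always_eventually allI impI)
    fix h :: real assume h: "h \<noteq> 0"
    have "(F (x+h) - F x) /\<^sub>R h - D = (inverse h) *\<^sub>R (F (x + h) - F x - h *\<^sub>R D)"
      using h by (simp add: scaleR_diff_right)
    then show "norm ((F (x+h) - F x) /\<^sub>R h - D) = norm (F (x + h) - F x - h *\<^sub>R D) / norm h"
      by (simp add: divide_inverse mult.commute)
  qed
  ultimately show "(\<lambda>h. norm (F (x + h) - F x - h *\<^sub>R D) / norm h) \<midarrow>0\<rightarrow> 0"
    by (rule Lim_transform_eventually) 
qed



lemma deriv_under_integral:
  fixes f :: "real \<Rightarrow> real \<Rightarrow> 'b::{banach, second_countable_topology}"
  assumes r: "r > 0"
    and meas: "\<And>x. f x \<in> borel_measurable lborel"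
    and f'meas: "f' \<in> borel_measurable lborel"
    and intf: "integrable lborel (f x0)"
    and g: "integrable lborel g"
    and lip: "\<And>x t. \<bar>x - x0\<bar> < r \<Longrightarrow> norm (f x t - f x0 t) \<le> \<bar>x - x0\<bar> * g t"
    and lim: "AE t in lborel. ((\<lambda>h. (f (x0+h) t - f x0 t) /\<^sub>R h) \<longlongrightarrow> f' t) (at 0)"
  shows "((\<lambda>x. integral\<^sup>L lborel (f x)) has_vector_derivative integral\<^sup>L lborel f') (at x0)"
proof (rule vderiv_from_quot)
  have intx: "integrable lborel (f x)" if "\<bar>x - x0\<bar> < r" for x
  proof (rule Bochner_Integration.integrable_bound[OF Bochner_Integration.integrable_add[OF integrable_norm[OF intf] integrable_mult_right[OF g, of "\<bar>x - x0\<bar>"]]])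
    show "f x \<in> borel_measurable lborel" by (rule meas)
    show "AE t in lborel. norm (f x t) \<le> norm (norm (f x0 t) + \<bar>x - x0\<bar> * g t)"
    proof (rule AE_I2)
      fix t
      have "norm (f x t) \<le> norm (f x0 t) + norm (f x t - f x0 t)" by (rule norm_triangle_sub)
      also have "\<dots> \<le> norm (f x0 t) + \<bar>x - x0\<bar> * g t" using lip[OF that, of t] by simp
      also have "\<dots> \<le> norm (norm (f x0 t) + \<bar>x - x0\<bar> * g t)" by simp
      finally show "norm (f x t) \<le> norm (norm (f x0 t) + \<bar>x - x0\<bar> * g t)" .
    qed
  qed
  show "((\<lambda>h. (integral\<^sup>L lborel (f (x0 + h)) - integral\<^sup>L lborel (f x0)) /\<^sub>R h) \<longlongrightarrow> integral\<^sup>L lborel f') (at 0)"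
    unfolding tendsto_at_iff_sequentially
  proof (intro allI impI)
    fix X :: "nat \<Rightarrow> real"
    assume X0: "\<forall>i. X i \<in> UNIV - {0}" and XL: "X \<longlonglongrightarrow> 0"
    obtain N where N: "\<And>n. n \<ge> N \<Longrightarrow> norm (X n - 0) < r"
      using LIMSEQ_D[OF XL r] by blast
    define Y where "Y = (\<lambda>i. X (i + N))"
    have Yr: "\<bar>Y i\<bar> < r" for i using N[of "i+N"] by (simp add: Y_def)
    have Y0: "Y i \<noteq> 0" for i using X0 by (simp add: Y_def)
    have YL: "Y \<longlonglongrightarrow> 0" unfolding Y_def by (rule LIMSEQ_ignore_initial_segment[OF XL])
    define s where "s = (\<lambda>i t. (f (x0 + Y i) t - f x0 t) /\<^sub>R Y i)"
    have eq: "(integral\<^sup>L lborel (f (x0 + Y i)) - integral\<^sup>L lborel (f x0)) /\<^sub>R Y i = integral\<^sup>L lborel (s i)" for i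
    proof -
      have "integrable lborel (f (x0 + Y i))" using intx[of "x0 + Y i"] Yr[of i] by simp
      then show ?thesis unfolding s_def
        by (simp add: integral_diff[symmetric] intf)
    qed
    have "(\<lambda>i. integral\<^sup>L lborel (s i)) \<longlonglongrightarrow> integral\<^sup>L lborel f'"
    proof (rule integral_dominated_convergence[OF f'meas _ g])
      show "s i \<in> borel_measurable lborel" for i unfolding s_def using meas by measurable
      show "AE t in lborel. (\<lambda>i. s i t) \<longlonglongrightarrow> f' t"
        using lim
      proof (rule AE_mp, intro AE_I2 impI)
        fix t assume "((\<lambda>h. (f (x0+h) t - f x0 t) /\<^sub>R h) \<longlongrightarrow> f' t) (at 0)"
        then have "((\<lambda>h. (f (x0+h) t - f x0 t) /\<^sub>R h) \<circ> Y) \<longlonglongrightarrow> f' t"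
          unfolding tendsto_at_iff_sequentially using Y0 YL by auto
        then show "(\<lambda>i. s i t) \<longlonglongrightarrow> f' t" by (simp add: s_def o_def)
      qed
      show "AE t in lborel. norm (s i t) \<le> g t" for i
      proof (rule AE_I2)
        fix t
        have "norm (s i t) = norm (f (x0 + Y i) t - f x0 t) / \<bar>Y i\<bar>" by (simp add: s_def divide_inverse mult.commute)
        also have "\<dots> \<le> (\<bar>Y i\<bar> * g t) / \<bar>Y i\<bar>"
          using lip[of "x0 + Y i" t] Yr[of i] by (intro divide_right_mono) auto
        also have "\<dots> = g t" using Y0[of i] by simp
        finally show "norm (s i t) \<le> g t" .
      qed
    qed
    then have "(\<lambda>i. (integral\<^sup>L lborel (f (x0 + X (i + N))) - integral\<^sup>L lborel (f x0)) /\<^sub>R X (i + N)) \<longlonglongrightarrow> integral\<^sup>L lborel f'"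
      using eq by (simp add: Y_def)
    then show "((\<lambda>h. (integral\<^sup>L lborel (f (x0 + h)) - integral\<^sup>L lborel (f x0)) /\<^sub>R h) \<circ> X) \<longlonglongrightarrow> integral\<^sup>L lborel f'"
      unfolding o_def by (rule LIMSEQ_offset)
  qed
qed



lemma lip_seg:
  fixes \<phi> \<phi>' :: "real \<Rightarrow> real"
  assumes st: "s \<le> t" and cont: "continuous_on {s..t} \<phi>"
    and der: "\<And>z. s < z \<Longrightarrow> z < t \<Longrightarrow> (\<phi> has_real_derivative \<phi>' z) (at z)"
    and bd: "\<And>z. s < z \<Longrightarrow> z < t \<Longrightarrow> \<bar>\<phi>' z\<bar> \<le> L"
  shows "\<bar>\<phi> t - \<phi> s\<bar> \<le> L * (t - s)"
proof (cases "s = t")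
  case True then show ?thesis by simp
next
  case False
  then have lt: "s < t" using st by simp
  obtain l z where z: "s < z" "z < t" "DERIV \<phi> z :> l" "\<phi> t - \<phi> s = (t - s) * l"
    using MVT[OF lt cont] der by (meson real_differentiable_def)
  have "l = \<phi>' z" using z der[OF z(1,2)] DERIV_unique by blast
  then have "\<bar>l\<bar> \<le> L" using bd[OF z(1,2)] by simp
  then show ?thesis using z(4) lt by (simp add: abs_mult mult.commute mult_right_mono)
qed

lemma lip_kink:
  fixes \<phi> \<phi>' :: "real \<Rightarrow> real"
  assumes cont: "continuous_on {a..b} \<phi>"
    and der: "\<And>z. a < z \<Longrightarrow> z < b \<Longrightarrow> z \<noteq> c \<Longrightarrow> (\<phi> has_real_derivative \<phi>' z) (at z)"
    and bd: "\<And>z. a < z \<Longrightarrow> z < b \<Longrightarrow> z \<noteq> c \<Longrightarrow> \<bar>\<phi>' z\<bar> \<le> L"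
    and s: "s \<in> {a..b}" and t: "t \<in> {a..b}"
  shows "\<bar>\<phi> t - \<phi> s\<bar> \<le> L * \<bar>t - s\<bar>"
proof -
  have main: "\<bar>\<phi> t - \<phi> s\<bar> \<le> L * (t - s)" if st: "s \<le> t" and s: "s \<in> {a..b}" and t: "t \<in> {a..b}" for s t
  proof (cases "s < c \<and> c < t")
    case True
    have c: "c \<in> {a..b}" using True s t by auto
    have 1: "\<bar>\<phi> c - \<phi> s\<bar> \<le> L * (c - s)"
      by (rule lip_seg[where \<phi>'=\<phi>']) (use True s t c in \<open>auto intro: continuous_on_subset[OF cont] der bd\<close>)
    have 2: "\<bar>\<phi> t - \<phi> c\<bar> \<le> L * (t - c)"
      by (rule lip_seg[where \<phi>'=\<phi>']) (use True s t c in \<open>auto intro: continuous_on_subset[OF cont] der bd\<close>)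
    have "\<bar>\<phi> t - \<phi> s\<bar> \<le> \<bar>\<phi> c - \<phi> s\<bar> + \<bar>\<phi> t - \<phi> c\<bar>" by simp
    also have "\<dots> \<le> L * (c - s) + L * (t - c)" using 1 2 by simp
    finally show ?thesis by (simp add: algebra_simps)
  next
    case False
    show ?thesis
      by (rule lip_seg[where \<phi>'=\<phi>']) (use False s t st in \<open>auto intro: continuous_on_subset[OF cont] der bd\<close>)
  qed
  show ?thesis
  proof (cases "s \<le> t")
    case True then show ?thesis using main[OF True s t] by simp
  next
    case False then show ?thesis using main[of t s] s t by (simp add: abs_minus_commute)
  qed
qed



lemma L1_bound:
  fixes u :: "real \<Rightarrow> complex"
  assumes L2: "L2_Rplus u"
  shows "integrable lborel (\<lambda>y. indicator {0<..1} y * cmod (u y))"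
    and "integral\<^sup>L lborel (\<lambda>y. indicator {0<..1} y * cmod (u y)) \<le> L2norm u"
proof -
  have um[measurable]: "u \<in> borel_measurable lborel" using L2 by (simp add: L2_Rplus_def)
  have wi: "integrable lborel (\<lambda>y. indicator {0<..} y * (cmod (u y))\<^sup>2)"
    using L2 by (simp add: L2_Rplus_def set_integrable_def mult.commute)
  define W where "W = integral\<^sup>L lborel (\<lambda>y. indicator {0<..} y * (cmod (u y))\<^sup>2)"
  have W0: "W \<ge> 0" unfolding W_def by (intro integral_nonneg_AE) auto
  have NW: "L2norm u = sqrt W"
    by (simp add: L2norm_def W_def set_lebesgue_integral_def mult.commute)
  have ii: "integrable lborel (indicator {0<..1::real} :: real \<Rightarrow> real)"
    by (simp add: integrable_indicator_iff)
  have mi: "integral\<^sup>L lborel (indicator {0<..1::real} :: real \<Rightarrow> real) = 1" by simp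
  have pt: "indicator {0<..1} y * cmod (u y) \<le> (t * indicator {0<..1} y + indicator {0<..} y * (cmod (u y))\<^sup>2 / t) / 2"
    if t: "t > 0" for t y
  proof (cases "y \<in> {0<..1}")
    case True
    have "0 \<le> (t - cmod (u y))\<^sup>2" by simp
    then have "2 * t * cmod (u y) \<le> t^2 + (cmod (u y))\<^sup>2" by (simp add: power2_eq_square algebra_simps)
    then have "cmod (u y) \<le> (t + (cmod (u y))\<^sup>2 / t) / 2" using t
      by (simp add: field_simps power2_eq_square)
    then show ?thesis using True by simp
  next
    case False then have "indicator {0<..1} y = (0::real)" by simp
    then show ?thesis using t by simp
  qed
  have vi: "integrable lborel (\<lambda>y. indicator {0<..1} y * cmod (u y))"
  proof (rule Bochner_Integration.integrable_bound[OF Bochner_Integration.integrable_add[OF ii wi]])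
    show "(\<lambda>y. indicator {0<..1} y * cmod (u y)) \<in> borel_measurable lborel" by measurable
    show "AE y in lborel. norm (indicator {0<..1} y * cmod (u y)) \<le> norm (indicator {0<..1} y + indicator {0<..} y * (cmod (u y))\<^sup>2)"
    proof (rule AE_I2)
      fix y
      have "indicator {0<..1} y * cmod (u y) \<le> (1 * indicator {0<..1} y + indicator {0<..} y * (cmod (u y))\<^sup>2 / 1) / 2"
        by (rule pt) simp
      also have "\<dots> \<le> indicator {0<..1} y + indicator {0<..} y * (cmod (u y))\<^sup>2"
        by (simp add: indicator_def)
      finally show "norm (indicator {0<..1} y * cmod (u y)) \<le> norm (indicator {0<..1} y + indicator {0<..} y * (cmod (u y))\<^sup>2)"
        by (simp add: indicator_def)
    qed
  qed
  then show "integrable lborel (\<lambda>y. indicator {0<..1} y * cmod (u y))" .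
  have bt: "integral\<^sup>L lborel (\<lambda>y. indicator {0<..1} y * cmod (u y)) \<le> (t + W / t) / 2" if t: "t > 0" for t
  proof -
    have "integral\<^sup>L lborel (\<lambda>y. indicator {0<..1} y * cmod (u y))
        \<le> integral\<^sup>L lborel (\<lambda>y. (t * indicator {0<..1} y + indicator {0<..} y * (cmod (u y))\<^sup>2 / t) / 2)"
      by (intro integral_mono vi pt t) (intro integrable_divide Bochner_Integration.integrable_add integrable_mult_right ii wi)
    also have "\<dots> = (t + W / t) / 2"
      using ii wi by (simp add: W_def)
    finally show ?thesis .
  qed
  show "integral\<^sup>L lborel (\<lambda>y. indicator {0<..1} y * cmod (u y)) \<le> L2norm u"
  proof (cases "W = 0")
    case True
    have "integral\<^sup>L lborel (\<lambda>y. indicator {0<..1} y * cmod (u y)) \<le> 0 + e" if e: "e > 0" for e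
      using bt[of "2*e"] e True by simp
    then have "integral\<^sup>L lborel (\<lambda>y. indicator {0<..1} y * cmod (u y)) \<le> 0" by (rule field_le_epsilon)
    then show ?thesis unfolding NW True by simp
  next
    case False
    then have "sqrt W > 0" using W0 by simp
    have "W / sqrt W = sqrt W" using W0 by (simp add: real_div_sqrt)
    with bt[OF \<open>sqrt W > 0\<close>] show ?thesis unfolding NW by simp
  qed
qed



lemma op_gen:
  fixes k dk :: "real \<Rightarrow> real \<Rightarrow> real" and u :: "real \<Rightarrow> complex"
  assumes L2: "L2_Rplus u" and supp: "\<forall>y>1. u y = 0" and x: "x > 0" and \<delta>: "\<delta> > 0"
   and km: "\<And>s. k s \<in> borel_measurable lborel" and dkm: "\<And>s. dk s \<in> borel_measurable lborel"
   and kb: "\<And>y. 0 < y \<Longrightarrow> y \<le> 1 \<Longrightarrow> \<bar>k x y\<bar> \<le> Bk * x powr (-1-\<delta>)"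
   and dkb: "\<And>s y. 0 < s \<Longrightarrow> 0 < y \<Longrightarrow> y \<le> 1 \<Longrightarrow> \<bar>s * dk s y\<bar> \<le> Bd * s powr (-1-\<delta>)"
   and der: "\<And>s y. 0 < s \<Longrightarrow> 0 < y \<Longrightarrow> y \<le> 1 \<Longrightarrow> s \<noteq> y \<Longrightarrow> ((\<lambda>s. k s y) has_real_derivative dk s y) (at s)"
   and cont: "\<And>y. 0 < y \<Longrightarrow> y \<le> 1 \<Longrightarrow> continuous_on {0<..} (\<lambda>s. k s y)"
  shows "cmod (intop k u x) \<le> Bk * L2norm u * x powr (-1-\<delta>)
     \<and> (\<exists>D. (intop k u has_vector_derivative D) (at x) \<and> cmod (x *\<^sub>R D) \<le> Bd * L2norm u * x powr (-1-\<delta>))"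
proof -
  have um[measurable]: "u \<in> borel_measurable lborel" using L2 by (simp add: L2_Rplus_def)
  note km[measurable] dkm[measurable]
  define V where "V y = indicator {0<..1} y * cmod (u y)" for y
  have Vi: "integrable lborel V" and VN: "integral\<^sup>L lborel V \<le> L2norm u"
    using L1_bound[OF L2] unfolding V_def by auto
  define N where "N = L2norm u"
  define f where "f s y = indicator {0<..1} y *\<^sub>R (complex_of_real (k s y) * u y)" for s y
  have fm[measurable]: "f s \<in> borel_measurable lborel" for s unfolding f_def by measurable
  have F: "intop k u = (\<lambda>s. integral\<^sup>L lborel (f s))"
  proof
    fix s
    have "(\<lambda>y. indicator {0<..} y *\<^sub>R (complex_of_real (k s y) * u y)) = f s"
    proof
      fix y show "indicator {0<..} y *\<^sub>R (complex_of_real (k s y) * u y) = f s y"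
        using supp by (cases "y > 1") (auto simp: f_def indicator_def)
    qed
    then show "intop k u s = integral\<^sup>L lborel (f s)"
      by (simp add: intop_def set_lebesgue_integral_def)
  qed
  have xp: "x powr (-1-\<delta>) > 0" using x by simp
  have Bk0: "Bk \<ge> 0" using kb[of 1] xp by (smt (verit) mult_nonpos_nonneg zero_le_mult_iff)
  have Bd0: "Bd \<ge> 0" using dkb[of x 1] xp x by (smt (verit) mult_nonpos_nonneg zero_le_mult_iff)
  have nb: "norm (f x y) \<le> (Bk * x powr (-1-\<delta>)) * V y" for y
  proof (cases "y \<in> {0<..1}")
    case True
    then have "norm (f x y) = \<bar>k x y\<bar> * cmod (u y)" by (simp add: f_def norm_mult)
    also have "\<dots> \<le> (Bk * x powr (-1-\<delta>)) * cmod (u y)" using kb True by (intro mult_right_mono) auto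
    finally show ?thesis using True by (simp add: V_def)
  next
    case False then show ?thesis by (simp add: f_def V_def)
  qed
  have fxi: "integrable lborel (f x)"
  proof (rule Bochner_Integration.integrable_bound[OF integrable_mult_right[OF Vi, of "Bk * x powr (-1-\<delta>)"] fm])
    show "AE y in lborel. norm (f x y) \<le> norm (Bk * x powr (-1-\<delta>) * V y)"
    proof (rule AE_I2)
      fix y have "V y \<ge> 0" by (simp add: V_def)
      then show "norm (f x y) \<le> norm (Bk * x powr (-1-\<delta>) * V y)" using nb[of y] Bk0 xp by simp
    qed
  qed
  have P1: "cmod (intop k u x) \<le> Bk * L2norm u * x powr (-1-\<delta>)"
  proof -
    have "cmod (intop k u x) \<le> integral\<^sup>L lborel (\<lambda>y. norm (f x y))"
      unfolding F by (rule integral_norm_bound)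
    also have "\<dots> \<le> integral\<^sup>L lborel (\<lambda>y. (Bk * x powr (-1-\<delta>)) * V y)"
      by (intro integral_mono integrable_norm fxi integrable_mult_right Vi nb)
    also have "\<dots> = (Bk * x powr (-1-\<delta>)) * integral\<^sup>L lborel V" by simp
    also have "\<dots> \<le> (Bk * x powr (-1-\<delta>)) * L2norm u"
      using VN Bk0 xp by (intro mult_left_mono) auto
    finally show ?thesis by (simp add: mult_ac)
  qed
  define L where "L = Bd * (x/2) powr (-2-\<delta>)"
  have L0: "L \<ge> 0" using Bd0 by (simp add: L_def)
  define f' where "f' y = indicator {0<..1} y *\<^sub>R (complex_of_real (dk x y) * u y)" for y
  have f'm[measurable]: "f' \<in> borel_measurable lborel" unfolding f'_def by measurable
  have dkbound: "\<bar>dk z y\<bar> \<le> L" if z: "x/2 \<le> z" and y: "0 < y" "y \<le> 1" for z y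
  proof -
    have zp: "z > 0" using z x by simp
    have "\<bar>dk z y\<bar> = \<bar>z * dk z y\<bar> / z" using zp by (simp add: abs_mult)
    also have "\<dots> \<le> Bd * z powr (-1-\<delta>) / z" using dkb[OF zp y] zp by (intro divide_right_mono) auto
    also have "\<dots> = Bd * z powr (-2-\<delta>)"
    proof -
      have e: "-2-\<delta> = (-1-\<delta>) - 1" by simp
      have "z powr (-2-\<delta>) = z powr (-1-\<delta>) / z powr 1" unfolding e by (rule powr_diff)
      then show ?thesis using zp by simp
    qed
    also have "\<dots> \<le> Bd * (x/2) powr (-2-\<delta>)"
      using \<delta> x z Bd0 by (intro mult_left_mono powr_mono2') auto
    finally show ?thesis by (simp add: L_def)
  qed
  have lip: "norm (f s y - f x y) \<le> \<bar>s - x\<bar> * (L * V y)" if s: "\<bar>s - x\<bar> < x/2" for s y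
  proof (cases "y \<in> {0<..1}")
    case True
    have kl: "\<bar>k s y - k x y\<bar> \<le> L * \<bar>s - x\<bar>"
    proof (rule lip_kink[where a="x/2" and b="3*x/2" and c=y and \<phi>'="\<lambda>z. dk z y"])
      show "continuous_on {x/2..3*x/2} (\<lambda>s. k s y)"
        using cont[of y] True x by (auto intro: continuous_on_subset)
      show "((\<lambda>s. k s y) has_real_derivative dk z y) (at z)" if "x/2 < z" "z < 3*x/2" "z \<noteq> y" for z
        using der[of z y] that True x by auto
      show "\<bar>dk z y\<bar> \<le> L" if "x/2 < z" "z < 3*x/2" "z \<noteq> y" for z
        using dkbound[of z y] that True by auto
      have "- (x/2) < s - x \<and> s - x < x/2" using s unfolding abs_less_iff by linarith
      then show "x \<in> {x/2..3*x/2}" "s \<in> {x/2..3*x/2}" using x by auto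
    qed
    have "norm (f s y - f x y) = \<bar>k s y - k x y\<bar> * cmod (u y)"
      using True by (simp add: f_def norm_mult ring_distribs[symmetric] flip: of_real_diff left_diff_distrib)
    also have "\<dots> \<le> (L * \<bar>s - x\<bar>) * cmod (u y)" by (intro mult_right_mono kl) auto
    finally show ?thesis using True by (simp add: V_def mult_ac)
  next
    case False then show ?thesis by (simp add: f_def V_def)
  qed
  have lim: "AE y in lborel. ((\<lambda>h. (f (x+h) y - f x y) /\<^sub>R h) \<longlongrightarrow> f' y) (at 0)"
    using AE_lborel_singleton[of x]
  proof (rule AE_mp, intro AE_I2 impI)
    fix y :: real assume yx: "y \<noteq> x"
    show "((\<lambda>h. (f (x+h) y - f x y) /\<^sub>R h) \<longlongrightarrow> f' y) (at 0)"
    proof (cases "y \<in> {0<..1}")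
      case True
      have "DERIV (\<lambda>s. k s y) x :> dk x y" using der[of x y] True x yx by auto
      then have "((\<lambda>h. (k (x + h) y - k x y) / h) \<longlongrightarrow> dk x y) (at 0)" by (simp add: DERIV_def)
      then have "((\<lambda>h. complex_of_real ((k (x + h) y - k x y) / h) * u y) \<longlongrightarrow> complex_of_real (dk x y) * u y) (at 0)"
        by (intro tendsto_intros)
      moreover have "(f (x+h) y - f x y) /\<^sub>R h = complex_of_real ((k (x + h) y - k x y) / h) * u y" for h
        using True by (simp add: f_def scaleR_conv_of_real field_simps)
      ultimately show ?thesis using True by (simp add: f'_def)
    next
      case False then show ?thesis by (simp add: f_def f'_def)
    qed
  qed
  have D: "(intop k u has_vector_derivative integral\<^sup>L lborel f') (at x)"
    unfolding F
    by (rule deriv_under_integral[where r="x/2" and g="\<lambda>y. L * V y", OF _ fm f'm fxi integrable_mult_right[OF Vi] lip lim])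
       (use x in auto)
  have nb': "norm (x *\<^sub>R f' y) \<le> (Bd * x powr (-1-\<delta>)) * V y" for y
  proof (cases "y \<in> {0<..1}")
    case True
    then have "norm (x *\<^sub>R f' y) = \<bar>x * dk x y\<bar> * cmod (u y)" using x by (simp add: f'_def norm_mult abs_mult)
    also have "\<dots> \<le> (Bd * x powr (-1-\<delta>)) * cmod (u y)" using dkb[of x y] True x by (intro mult_right_mono) auto
    finally show ?thesis using True by (simp add: V_def)
  next
    case False then show ?thesis by (simp add: f'_def V_def)
  qed
  have f'i: "integrable lborel (\<lambda>y. x *\<^sub>R f' y)"
  proof (rule Bochner_Integration.integrable_bound[OF integrable_mult_right[OF Vi, of "Bd * x powr (-1-\<delta>)"]])
    show "(\<lambda>y. x *\<^sub>R f' y) \<in> borel_measurable lborel" by measurable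
    show "AE y in lborel. norm (x *\<^sub>R f' y) \<le> norm (Bd * x powr (-1-\<delta>) * V y)"
    proof (rule AE_I2)
      fix y have "V y \<ge> 0" by (simp add: V_def)
      then show "norm (x *\<^sub>R f' y) \<le> norm (Bd * x powr (-1-\<delta>) * V y)" using nb'[of y] Bd0 xp by simp
    qed
  qed
  have "cmod (x *\<^sub>R integral\<^sup>L lborel f') = cmod (integral\<^sup>L lborel (\<lambda>y. x *\<^sub>R f' y))" by simp
  also have "\<dots> \<le> integral\<^sup>L lborel (\<lambda>y. norm (x *\<^sub>R f' y))" by (rule integral_norm_bound)
  also have "\<dots> \<le> integral\<^sup>L lborel (\<lambda>y. (Bd * x powr (-1-\<delta>)) * V y)"
    by (intro integral_mono integrable_norm f'i integrable_mult_right Vi nb')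
  also have "\<dots> = (Bd * x powr (-1-\<delta>)) * integral\<^sup>L lborel V" by simp
  also have "\<dots> \<le> (Bd * x powr (-1-\<delta>)) * L2norm u"
    using VN Bd0 xp by (intro mult_left_mono) auto
  finally have P2: "cmod (x *\<^sub>R integral\<^sup>L lborel f') \<le> Bd * L2norm u * x powr (-1-\<delta>)" by (simp add: mult_ac)
  show ?thesis using P1 D P2 by blast
qed



lemma k1_eq:
  assumes s: "0 < s" and y: "0 < y"
  shows "kernel1 \<nu> s y = (if y \<le> s then 1/(2*\<nu>) * (y powr (\<nu>+1/2) * s powr (1/2-\<nu>))
                          else 1/(2*\<nu>) * (y powr (1/2-\<nu>) * s powr (\<nu>+1/2)))"
proof -
  have sq: "sqrt (s*y) = (s*y) powr (1/2)" using s y by (simp add: powr_half_sqrt)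
  have a: "(y / s) powr \<nu> * (s*y) powr (1/2) = y powr (\<nu>+1/2) * s powr (1/2-\<nu>)"
    using s y by (simp add: powr_def ln_mult ln_div exp_add[symmetric] algebra_simps)
  have b: "(y / s) powr (-\<nu>) * (s*y) powr (1/2) = y powr (1/2-\<nu>) * s powr (\<nu>+1/2)"
    using s y by (simp add: powr_def ln_mult ln_div exp_add[symmetric] algebra_simps)
  show ?thesis unfolding kernel1_def sq using a b by (simp add: mult.assoc)
qed

lemma pw_ge1:
  fixes s a :: real
  assumes "0 < s" "s \<le> 1" "a \<le> 0"
  shows "1 \<le> s powr a"
  using powr_mono2'[OF assms(3) assms(1) assms(2)] by simp

lemma hb1:
  fixes s y \<nu> \<delta> :: real
  assumes y: "0 < y" "y \<le> s" "y \<le> 1" and d: "0 < \<delta>" and nu: "3/2 + \<delta> \<le> \<nu>"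
  shows "y powr (\<nu>+1/2) * s powr (1/2-\<nu>) \<le> s powr (-1-\<delta>)"
proof (cases "s \<ge> 1")
  case True
  have "y powr (\<nu>+1/2) \<le> 1" using y nu d by (intro powr_le1) auto
  moreover have "s powr (1/2-\<nu>) \<le> s powr (-1-\<delta>)" using True nu by (intro powr_mono) auto
  moreover have "s powr (1/2-\<nu>) \<ge> 0" by simp
  ultimately show ?thesis by (metis mult_left_le_one_le order_trans powr_ge_zero)
next
  case False
  have sp: "s > 0" using y by simp
  have "y powr (\<nu>+1/2) * s powr (1/2-\<nu>) \<le> s powr (\<nu>+1/2) * s powr (1/2-\<nu>)"
    using y nu d by (intro mult_right_mono powr_mono2) auto
  also have "\<dots> = s" using sp by (simp add: powr_add[symmetric])
  also have "\<dots> \<le> 1" using False by simp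
  also have "1 \<le> s powr (-1-\<delta>)" using sp False d by (intro pw_ge1) auto
  finally show ?thesis .
qed

lemma hb2:
  fixes s y \<nu> \<delta> :: real
  assumes y: "0 < s" "s < y" "y \<le> 1" and d: "0 < \<delta>" and nu: "3/2 + \<delta> \<le> \<nu>"
  shows "y powr (1/2-\<nu>) * s powr (\<nu>+1/2) \<le> s powr (-1-\<delta>)"
proof -
  have "y powr (1/2-\<nu>) * s powr (\<nu>+1/2) \<le> s powr (1/2-\<nu>) * s powr (\<nu>+1/2)"
    using y nu d by (intro mult_right_mono powr_mono2') auto
  also have "\<dots> = s" using y by (simp add: powr_add[symmetric])
  also have "\<dots> \<le> 1" using y by simp
  also have "1 \<le> s powr (-1-\<delta>)" using y d by (intro pw_ge1) auto
  finally show ?thesis .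
qed

lemma pw_shift: "0 < (s::real) \<Longrightarrow> s * s powr (a - 1) = s powr a"
proof -
  assume s: "0 < s"
  have "s powr (a - 1 + 1) = s powr (a - 1) * s powr 1" by (rule powr_add)
  then show ?thesis using s by (simp add: mult.commute)
qed

definition dk1 :: "real \<Rightarrow> real \<Rightarrow> real \<Rightarrow> real" where
  "dk1 \<nu> s y = (if y \<le> s then 1/(2*\<nu>) * (y powr (\<nu>+1/2) * ((1/2-\<nu>) * s powr (1/2-\<nu>-1)))
                else 1/(2*\<nu>) * (y powr (1/2-\<nu>) * ((\<nu>+1/2) * s powr (\<nu>+1/2-1))))"

lemma part1:
  fixes \<delta> :: real
  assumes d: "\<delta> > 0"
  shows "\<exists>C>0. \<forall>\<nu> u. \<nu> \<ge> 3/2 + \<delta> \<longrightarrow> L2_Rplus u \<longrightarrow> (\<forall>y>1. u y = 0) \<longrightarrow>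
       (\<forall>x>0. cmod (intop (kernel1 \<nu>) u x) \<le> C / \<nu> * L2norm u * x powr (-1 - \<delta>) \<and>
              (\<exists>D. (intop (kernel1 \<nu>) u has_vector_derivative D) (at x) \<and>
                   cmod (x *\<^sub>R D) \<le> C * L2norm u * x powr (-1 - \<delta>)))"
proof -
  have main: "cmod (intop (kernel1 \<nu>) u x) \<le> (1/\<nu>) * L2norm u * x powr (-1-\<delta>)
     \<and> (\<exists>D. (intop (kernel1 \<nu>) u has_vector_derivative D) (at x) \<and> cmod (x *\<^sub>R D) \<le> 1 * L2norm u * x powr (-1-\<delta>))"
    if nu: "3/2 + \<delta> \<le> \<nu>" and L2: "L2_Rplus u" and supp: "\<forall>y>1. u y = 0" and x: "0 < x"
    for \<nu> :: real and u :: "real \<Rightarrow> complex" and x :: real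
  proof -
  have nu0: "\<nu> > 0" using nu d by simp
  have res: "cmod (intop (kernel1 \<nu>) u x) \<le> (1/\<nu>) * L2norm u * x powr (-1-\<delta>)
     \<and> (\<exists>D. (intop (kernel1 \<nu>) u has_vector_derivative D) (at x) \<and> cmod (x *\<^sub>R D) \<le> 1 * L2norm u * x powr (-1-\<delta>))"
  proof (rule op_gen[OF L2 supp x d, where dk = "dk1 \<nu>"])
    show "kernel1 \<nu> s \<in> borel_measurable lborel" for s unfolding kernel1_def by measurable
    show "dk1 \<nu> s \<in> borel_measurable lborel" for s unfolding dk1_def by measurable
    show "\<bar>kernel1 \<nu> x y\<bar> \<le> 1 / \<nu> * x powr (- 1 - \<delta>)" if y: "0 < y" "y \<le> 1" for y
    proof (cases "y \<le> x")
      case True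
      have P: "0 \<le> y powr (\<nu>+1/2) * x powr (1/2-\<nu>)" by simp
      have "\<bar>kernel1 \<nu> x y\<bar> = 1/(2*\<nu>) * (y powr (\<nu>+1/2) * x powr (1/2-\<nu>))"
        using True k1_eq[OF x y(1)] nu0 P by simp
      also have "\<dots> \<le> 1/(2*\<nu>) * x powr (-1-\<delta>)" using hb1[OF y(1) True y(2) d nu] nu0 by (intro mult_left_mono) auto
      also have "\<dots> \<le> 1/\<nu> * x powr (-1-\<delta>)" using nu0 by (intro mult_right_mono) (auto simp: field_simps)
      finally show ?thesis .
    next
      case False
      have P: "0 \<le> y powr (1/2-\<nu>) * x powr (\<nu>+1/2)" by simp
      have "\<bar>kernel1 \<nu> x y\<bar> = 1/(2*\<nu>) * (y powr (1/2-\<nu>) * x powr (\<nu>+1/2))"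
        using False k1_eq[OF x y(1)] nu0 P by simp
      also have "\<dots> \<le> 1/(2*\<nu>) * x powr (-1-\<delta>)" using hb2[OF x _ y(2) d nu] False nu0 by (intro mult_left_mono) auto
      also have "\<dots> \<le> 1/\<nu> * x powr (-1-\<delta>)" using nu0 by (intro mult_right_mono) (auto simp: field_simps)
      finally show ?thesis .
    qed
    show "\<bar>s * dk1 \<nu> s y\<bar> \<le> 1 * s powr (- 1 - \<delta>)" if s: "0 < s" and y: "0 < y" "y \<le> 1" for s y
    proof (cases "y \<le> s")
      case True
      have e: "s * s powr (1/2-\<nu>-1) = s powr (1/2-\<nu>)" using s by (rule pw_shift)
      have "\<bar>s * dk1 \<nu> s y\<bar> = \<bar>1/(2*\<nu>) * (1/2-\<nu>)\<bar> * (y powr (\<nu>+1/2) * s powr (1/2-\<nu>))"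
        using True s by (simp add: dk1_def abs_mult e[symmetric] mult_ac)
      also have "\<dots> \<le> 1 * (y powr (\<nu>+1/2) * s powr (1/2-\<nu>))" using nu0 nu d
        by (intro mult_right_mono) (auto simp: field_simps abs_if)
      also have "\<dots> \<le> 1 * s powr (-1-\<delta>)" using hb1[OF y(1) True y(2) d nu] by simp
      finally show ?thesis .
    next
      case False
      have e: "s * s powr (\<nu>+1/2-1) = s powr (\<nu>+1/2)" using s by (rule pw_shift)
      have "\<bar>s * dk1 \<nu> s y\<bar> = \<bar>1/(2*\<nu>) * (\<nu>+1/2)\<bar> * (y powr (1/2-\<nu>) * s powr (\<nu>+1/2))"
        using False s by (simp add: dk1_def abs_mult e[symmetric] mult_ac)
      also have "\<dots> \<le> 1 * (y powr (1/2-\<nu>) * s powr (\<nu>+1/2))" using nu0 nu d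
        by (intro mult_right_mono) (auto simp: field_simps abs_if)
      also have "\<dots> \<le> 1 * s powr (-1-\<delta>)" using hb2[OF s _ y(2) d nu] False by simp
      finally show ?thesis .
    qed
    show "((\<lambda>s. kernel1 \<nu> s y) has_real_derivative dk1 \<nu> s y) (at s)"
      if s: "0 < s" and y: "0 < y" "y \<le> 1" and sy: "s \<noteq> y" for s y
    proof (cases "y < s")
      case True
      have "((\<lambda>t. 1/(2*\<nu>) * (y powr (\<nu>+1/2) * t powr (1/2-\<nu>))) has_real_derivative
             1/(2*\<nu>) * (y powr (\<nu>+1/2) * ((1/2-\<nu>) * s powr (1/2-\<nu>-1)))) (at s)"
        using s by (intro derivative_eq_intros has_real_derivative_powr) auto
      note dd = this
      have "dk1 \<nu> s y = 1/(2*\<nu>) * (y powr (\<nu>+1/2) * ((1/2-\<nu>) * s powr (1/2-\<nu>-1)))"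
        using True by (simp add: dk1_def)
      note dkeq = this
      show ?thesis unfolding dkeq
      proof (rule has_field_derivative_transform_within_open[OF dd, where S="{y<..}"])
        show "open {y<..}" by simp
        show "s \<in> {y<..}" using True by simp
        show "1/(2*\<nu>) * (y powr (\<nu>+1/2) * t powr (1/2-\<nu>)) = kernel1 \<nu> t y" if "t \<in> {y<..}" for t
          using that y k1_eq[of t y \<nu>] by simp
      qed
    next
      case False
      then have ys: "s < y" using sy by simp
      have "((\<lambda>t. 1/(2*\<nu>) * (y powr (1/2-\<nu>) * t powr (\<nu>+1/2))) has_real_derivative
             1/(2*\<nu>) * (y powr (1/2-\<nu>) * ((\<nu>+1/2) * s powr (\<nu>+1/2-1)))) (at s)"
        using s by (intro derivative_eq_intros has_real_derivative_powr) auto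
      note dd = this
      have "dk1 \<nu> s y = 1/(2*\<nu>) * (y powr (1/2-\<nu>) * ((\<nu>+1/2) * s powr (\<nu>+1/2-1)))"
        using ys by (simp add: dk1_def)
      note dkeq = this
      show ?thesis unfolding dkeq
      proof (rule has_field_derivative_transform_within_open[OF dd, where S="{0<..<y}"])
        show "open {0<..<y}" by simp
        show "s \<in> {0<..<y}" using ys s by simp
        show "1/(2*\<nu>) * (y powr (1/2-\<nu>) * t powr (\<nu>+1/2)) = kernel1 \<nu> t y" if "t \<in> {0<..<y}" for t
          using that y k1_eq[of t y \<nu>] by simp
      qed
    qed
    show "continuous_on {0<..} (\<lambda>s. kernel1 \<nu> s y)" if y: "0 < y" "y \<le> 1" for y
    proof -
      have "continuous_on {0<..} (\<lambda>s. if -s \<le> -y then 1/(2*\<nu>) * (y powr (\<nu>+1/2) * s powr (1/2-\<nu>))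
                          else 1/(2*\<nu>) * (y powr (1/2-\<nu>) * s powr (\<nu>+1/2)))"
        using nu0 by (intro continuous_on_cases_le) (auto intro!: continuous_intros simp: mult_ac)
      then show ?thesis
        by (rule continuous_on_cong[THEN iffD1, rotated 2]) (use y k1_eq in auto)
    qed
  qed
  then show ?thesis by simp
  qed
  show ?thesis by (rule exI[of _ 1]) (use main in auto)
qed



lemma key_fin:
  fixes a p :: real and n :: nat assumes a: "a > 0" and p: "p > 0"
  shows "(\<integral>\<^sup>+t. ennreal (indicator {0..real n} t * exp (p*t - a * exp t)) \<partial>lborel) \<le> ennreal (a powr (-p) * Gamma p)"
proof -
  define f where "f r = r powr (p-1) / exp r" for r :: real
  have sub: "(\<integral>\<^sup>+x. f x * indicator {a * exp 0 .. a * exp (real n)} x \<partial>lborel) =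
     (\<integral>\<^sup>+x. f (a * exp x) * (a * exp x) * indicator {0..real n} x \<partial>lborel)"
    by (rule nn_integral_substitution[where g="\<lambda>x. a * exp x" and g'="\<lambda>x. a * exp x"])
       (use a in \<open>auto intro!: derivative_eq_intros continuous_intros simp: set_borel_measurable_def f_def less_imp_le\<close>)
  have pt: "indicator {0..real n} t * exp (p*t - a * exp t) = a powr (-p) * (f (a * exp t) * (a * exp t) * indicator {0..real n} t)" for t
  proof -
    have "f (a * exp t) * (a * exp t) = (a * exp t) powr p / exp (a * exp t)"
      using a by (simp add: f_def powr_diff field_simps)
    also have "\<dots> = a powr p * exp (p * t) / exp (a * exp t)"
      using a by (simp add: powr_def ln_mult exp_add[symmetric] distrib_left)
    finally have "f (a * exp t) * (a * exp t) = a powr p * exp (p * t) / exp (a * exp t)" .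
    then show ?thesis using a by (simp add: exp_diff powr_minus field_simps)
  qed
  have "(\<integral>\<^sup>+t. ennreal (indicator {0..real n} t * exp (p*t - a * exp t)) \<partial>lborel)
      = (\<integral>\<^sup>+t. ennreal (a powr (-p)) * ennreal (f (a * exp t) * (a * exp t) * indicator {0..real n} t) \<partial>lborel)"
    unfolding pt by (intro nn_integral_cong ennreal_mult') simp
  also have "\<dots> = ennreal (a powr (-p)) * (\<integral>\<^sup>+t. ennreal (f (a * exp t) * (a * exp t) * indicator {0..real n} t) \<partial>lborel)"
    by (rule nn_integral_cmult) (simp add: f_def)
  finally have eq1: "(\<integral>\<^sup>+t. ennreal (indicator {0..real n} t * exp (p*t - a * exp t)) \<partial>lborel)
      = ennreal (a powr (-p)) * (\<integral>\<^sup>+t. ennreal (f (a * exp t) * (a * exp t) * indicator {0..real n} t) \<partial>lborel)" .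
  have "(\<integral>\<^sup>+t. ennreal (f (a * exp t) * (a * exp t) * indicator {0..real n} t) \<partial>lborel) = 
      (\<integral>\<^sup>+x. f x * indicator {a * exp 0 .. a * exp (real n)} x \<partial>lborel)"
    using sub by simp
  also have "\<dots> \<le> (\<integral>\<^sup>+x. ennreal (indicator {0..} x * x powr (p - 1) / exp x) \<partial>lborel)"
    using a by (intro nn_integral_mono) (auto simp: f_def indicator_def)
  also have "\<dots> = ennreal (Gamma p)" using Gamma_conv_nn_integral_real[OF p] by simp
  finally have "(\<integral>\<^sup>+t. ennreal (f (a * exp t) * (a * exp t) * indicator {0..real n} t) \<partial>lborel) \<le> ennreal (Gamma p)" .
  then show ?thesis unfolding eq1 using ennreal_mult'[of "a powr -p" "Gamma p"]
    by (simp add: mult_left_mono)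
qed

lemma key_nn:
  fixes a p :: real assumes a: "a > 0" and p: "p > 0"
  shows "(\<integral>\<^sup>+t. ennreal (indicator {0..} t * exp (p*t - a * exp t)) \<partial>lborel) \<le> ennreal (a powr (-p) * Gamma p)"
proof -
  define F where "F n t = ennreal (indicator {0..real n} t * exp (p*t - a * exp t))" for n :: nat and t :: real
  have inc: "incseq F"
    unfolding incseq_def le_fun_def F_def
    by (auto intro!: ennreal_leI mult_right_mono simp: indicator_def)
  have sup: "(SUP n. F n t) = ennreal (indicator {0..} t * exp (p*t - a * exp t))" for t
  proof (rule antisym)
    show "(SUP n. F n t) \<le> ennreal (indicator {0..} t * exp (p*t - a * exp t))"
      by (rule SUP_least) (auto simp: F_def indicator_def intro!: ennreal_leI)
    show "ennreal (indicator {0..} t * exp (p*t - a * exp t)) \<le> (SUP n. F n t)"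
    proof (cases "t \<ge> 0")
      case True
      have "t \<le> real (nat \<lceil>t\<rceil>)" by linarith
      then have "ennreal (indicator {0..} t * exp (p*t - a * exp t)) = F (nat \<lceil>t\<rceil>) t"
        using True by (simp add: F_def indicator_def)
      also have "\<dots> \<le> (SUP n. F n t)" by (rule SUP_upper) simp
      finally show ?thesis .
    next
      case False then show ?thesis by simp
    qed
  qed
  have "(\<integral>\<^sup>+t. ennreal (indicator {0..} t * exp (p*t - a * exp t)) \<partial>lborel) = (\<integral>\<^sup>+t. (SUP n. F n t) \<partial>lborel)"
    by (simp add: sup)
  also have "\<dots> = (SUP n. integral\<^sup>N lborel (F n))"
    by (rule nn_integral_monotone_convergence_SUP[OF inc]) (unfold F_def, measurable)
  also have "\<dots> \<le> ennreal (a powr (-p) * Gamma p)"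
    by (rule SUP_least) (use key_fin[OF a p] in \<open>simp add: F_def[abs_def]\<close>)
  finally show ?thesis .
qed

lemma key_int:
  fixes q :: "real \<Rightarrow> real" and a p :: real
  assumes a: "a > 0" and p: "p > 0" and qm: "q \<in> borel_measurable lborel"
    and q0: "\<And>t. t \<ge> 0 \<Longrightarrow> 0 \<le> q t" and qb: "\<And>t. t \<ge> 0 \<Longrightarrow> q t \<le> exp (p*t - a * exp t)"
  shows "integrable lborel (\<lambda>t. indicator {0..} t * q t)"
    and "integral\<^sup>L lborel (\<lambda>t. indicator {0..} t * q t) \<le> a powr (-p) * Gamma p"
proof -
  have le: "(\<integral>\<^sup>+t. ennreal (indicator {0..} t * q t) \<partial>lborel) \<le> ennreal (a powr (-p) * Gamma p)"
    by (rule order_trans[OF nn_integral_mono key_nn[OF a p]]) (auto simp: indicator_def intro!: ennreal_leI qb)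
  have m: "(\<lambda>t. indicator {0..} t * q t) \<in> borel_measurable lborel" using qm by measurable
  have nn: "AE t in lborel. 0 \<le> indicator {0..} t * q t" by (auto simp: indicator_def q0)
  show int: "integrable lborel (\<lambda>t. indicator {0..} t * q t)"
    by (rule integrableI_nonneg[OF m nn]) (use le in \<open>auto simp: top_unique intro: le_less_trans\<close>)
  have "ennreal (integral\<^sup>L lborel (\<lambda>t. indicator {0..} t * q t)) = (\<integral>\<^sup>+t. ennreal (indicator {0..} t * q t) \<partial>lborel)"
    by (rule nn_integral_eq_integral[OF int nn, symmetric])
  with le have "ennreal (integral\<^sup>L lborel (\<lambda>t. indicator {0..} t * q t)) \<le> ennreal (a powr (-p) * Gamma p)" by simp
  moreover have "Gamma p \<ge> 0" using p by (simp add: Gamma_real_pos less_imp_le)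
  ultimately show "integral\<^sup>L lborel (\<lambda>t. indicator {0..} t * q t) \<le> a powr (-p) * Gamma p"
    by (subst (asm) ennreal_le_iff) auto
qed



lemma measurable_cosh_real[measurable]:
  assumes [measurable]: "f \<in> borel_measurable M"
  shows "(\<lambda>x. cosh (f x :: real)) \<in> borel_measurable M"
  unfolding cosh_field_def by measurable

lemma cosh_le_exp: "0 \<le> (t::real) \<Longrightarrow> cosh t \<le> exp t"
  unfolding cosh_field_def by simp

lemma exp_le_2cosh: "exp (t::real) \<le> 2 * cosh t"
  unfolding cosh_field_def by simp

lemma besselK_eq: "besselK \<nu> w = integral\<^sup>L lborel (\<lambda>t. indicator {0..} t * (exp (- w * cosh t) * cosh (\<nu> * t)))"
  unfolding besselK_def set_lebesgue_integral_def by simp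

lemma K_bound:
  assumes w: "w > 0" and nu: "\<nu> > 0"
  shows "integrable lborel (\<lambda>t. indicator {0..} t * (exp (- w * cosh t) * cosh (\<nu> * t)))"
    and "besselK \<nu> w \<le> (w/2) powr (-\<nu>) * Gamma \<nu>" and "0 \<le> besselK \<nu> w"
proof -
  have qb: "exp (- w * cosh t) * cosh (\<nu> * t) \<le> exp (\<nu> * t - w/2 * exp t)" if t: "t \<ge> 0" for t
  proof -
    have "exp (- w * cosh t) \<le> exp (- (w/2) * exp t)"
      using exp_le_2cosh[of t] w by (simp add: mult_left_mono)
    moreover have "cosh (\<nu> * t) \<le> exp (\<nu> * t)" using nu t by (intro cosh_le_exp) simp
    ultimately have "exp (- w * cosh t) * cosh (\<nu> * t) \<le> exp (- (w/2) * exp t) * exp (\<nu> * t)"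
      by (intro mult_mono) auto
    then show ?thesis by (simp add: exp_add[symmetric])
  qed
  note KI = key_int[of "w/2" \<nu> "\<lambda>t. exp (- w * cosh t) * cosh (\<nu> * t)", OF _ nu _ _ qb]
  show "integrable lborel (\<lambda>t. indicator {0..} t * (exp (- w * cosh t) * cosh (\<nu> * t)))"
    using KI(1) w by simp
  show "besselK \<nu> w \<le> (w/2) powr (-\<nu>) * Gamma \<nu>"
    using KI(2) w unfolding besselK_eq by simp
  show "0 \<le> besselK \<nu> w" unfolding besselK_eq by (intro integral_nonneg_AE) (auto simp: indicator_def)
qed

definition dK :: "real \<Rightarrow> real \<Rightarrow> real" where
  "dK \<nu> w = - integral\<^sup>L lborel (\<lambda>t. indicator {0..} t * (cosh t * exp (- w * cosh t) * cosh (\<nu> * t)))"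

lemma dK_bound:
  assumes w: "w > 0" and nu: "\<nu> > 0"
  shows "\<bar>dK \<nu> w\<bar> \<le> (w/2) powr (-(\<nu>+1)) * Gamma (\<nu>+1)"
proof -
  have qb: "cosh t * exp (- w * cosh t) * cosh (\<nu> * t) \<le> exp ((\<nu>+1) * t - w/2 * exp t)" if t: "t \<ge> 0" for t
  proof -
    have "exp (- w * cosh t) \<le> exp (- (w/2) * exp t)"
      using exp_le_2cosh[of t] w by (simp add: mult_left_mono)
    moreover have "cosh (\<nu> * t) \<le> exp (\<nu> * t)" using nu t by (intro cosh_le_exp) simp
    moreover have "cosh t \<le> exp t" using t by (rule cosh_le_exp)
    ultimately have "cosh t * exp (- w * cosh t) * cosh (\<nu> * t) \<le> exp t * exp (- (w/2) * exp t) * exp (\<nu> * t)"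
      by (intro mult_mono) auto
    then show ?thesis by (simp add: exp_add[symmetric] algebra_simps)
  qed
  have nn: "0 \<le> integral\<^sup>L lborel (\<lambda>t. indicator {0..} t * (cosh t * exp (- w * cosh t) * cosh (\<nu> * t)))"
    by (intro integral_nonneg_AE) (auto simp: indicator_def)
  note KI = key_int[of "w/2" "\<nu>+1" "\<lambda>t. cosh t * exp (- w * cosh t) * cosh (\<nu> * t)", OF _ _ _ _ qb]
  show ?thesis using KI(2) w nu nn unfolding dK_def by simp
qed

lemma K_deriv:
  assumes w0: "w0 > 0" and nu: "\<nu> > 0"
  shows "(besselK \<nu> has_real_derivative dK \<nu> w0) (at w0)"
proof -
  define f where "f w t = indicator {0..} t * (exp (- w * cosh t) * cosh (\<nu> * t))" for w t :: real
  define f' where "f' t = indicator {0..} t * (- (cosh t * exp (- w0 * cosh t) * cosh (\<nu> * t)))" for t :: real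
  define g where "g t = indicator {0..} t * exp ((\<nu>+1) * t - (w0/4) * exp t)" for t :: real
  have gi: "integrable lborel g"
    unfolding g_def using w0 nu by (intro key_int(1)[where p="\<nu>+1" and a="w0/4"]) auto
  have lip: "norm (f w t - f w0 t) \<le> \<bar>w - w0\<bar> * g t" if ww: "\<bar>w - w0\<bar> < w0/2" for w t
  proof (cases "t \<ge> 0")
    case True
    define c where "c = cosh t"
    have c1: "c \<ge> 1" unfolding c_def by (rule cosh_real_ge_1)
    have ww': "- (w0/2) < w - w0 \<and> w - w0 < w0/2" using ww unfolding abs_less_iff by linarith
    have phi: "\<bar>exp (- w * c) - exp (- w0 * c)\<bar> \<le> (c * exp (- (w0/2) * c)) * \<bar>w - w0\<bar>"
    proof (rule lip_kink[where a="w0/2" and b="3*w0/2" and c=0 and \<phi>'="\<lambda>z. - c * exp (- z * c)"])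
      show "continuous_on {w0/2..3*w0/2} (\<lambda>w. exp (- w * c))" by (intro continuous_intros)
      show "((\<lambda>w. exp (- w * c)) has_real_derivative - c * exp (- z * c)) (at z)" for z
        by (auto intro!: derivative_eq_intros)
      show "\<bar>- c * exp (- z * c)\<bar> \<le> c * exp (- (w0/2) * c)" if "w0/2 < z" "z < 3*w0/2" "z \<noteq> 0" for z
        using that c1 by (simp add: abs_mult mult_left_mono)
      show "w0 \<in> {w0/2..3*w0/2}" "w \<in> {w0/2..3*w0/2}" using ww' w0 by auto
    qed
    have "norm (f w t - f w0 t) = \<bar>exp (- w * c) - exp (- w0 * c)\<bar> * cosh (\<nu> * t)"
      using True by (simp add: f_def c_def abs_mult left_diff_distrib[symmetric])
    also have "\<dots> \<le> ((c * exp (- (w0/2) * c)) * \<bar>w - w0\<bar>) * exp (\<nu> * t)"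
      using phi True nu by (intro mult_mono cosh_le_exp) auto
    also have "\<dots> \<le> ((exp t * exp (- (w0/4) * exp t)) * \<bar>w - w0\<bar>) * exp (\<nu> * t)"
    proof -
      have "c \<le> exp t" unfolding c_def using True by (rule cosh_le_exp)
      moreover have "exp (- (w0/2) * c) \<le> exp (- (w0/4) * exp t)"
        using exp_le_2cosh[of t] w0 by (simp add: c_def mult_left_mono)
      ultimately have "c * exp (- (w0/2) * c) \<le> exp t * exp (- (w0/4) * exp t)"
        using c1 by (intro mult_mono) auto
      then show ?thesis by (intro mult_right_mono) auto
    qed
    also have "\<dots> = \<bar>w - w0\<bar> * g t" using True
      by (simp add: g_def exp_add[symmetric] algebra_simps)
    finally show ?thesis .
  next
    case False then show ?thesis by (simp add: f_def g_def)
  qed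
  have lim: "AE t in lborel. ((\<lambda>h. (f (w0+h) t - f w0 t) /\<^sub>R h) \<longlongrightarrow> f' t) (at 0)"
  proof (rule AE_I2)
    fix t :: real
    have "((\<lambda>w. exp (- w * cosh t)) has_real_derivative - cosh t * exp (- w0 * cosh t)) (at w0)"
      by (auto intro!: derivative_eq_intros)
    from this[unfolded DERIV_def] have "((\<lambda>h. (exp (- (w0 + h) * cosh t) - exp (- w0 * cosh t)) / h) \<longlongrightarrow> - cosh t * exp (- w0 * cosh t)) (at 0)" .
    then have "((\<lambda>h. indicator {0..} t * cosh (\<nu> * t) * ((exp (- (w0 + h) * cosh t) - exp (- w0 * cosh t)) / h))
                 \<longlongrightarrow> indicator {0..} t * cosh (\<nu> * t) * (- cosh t * exp (- w0 * cosh t))) (at 0)"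
      by (intro tendsto_intros)
    moreover have "(f (w0+h) t - f w0 t) /\<^sub>R h = indicator {0..} t * cosh (\<nu> * t) * ((exp (- (w0 + h) * cosh t) - exp (- w0 * cosh t)) / h)" for h
      by (simp add: f_def field_simps)
    ultimately show "((\<lambda>h. (f (w0+h) t - f w0 t) /\<^sub>R h) \<longlongrightarrow> f' t) (at 0)"
      by (simp add: f'_def mult_ac)
  qed
  have D: "((\<lambda>w. integral\<^sup>L lborel (f w)) has_vector_derivative integral\<^sup>L lborel f') (at w0)"
    by (rule deriv_under_integral[where r="w0/2" and g=g, OF _ _ _ _ gi lip lim])
       (use w0 K_bound(1)[OF w0 nu] in \<open>auto simp: f_def f'_def\<close>)
  have e1: "(\<lambda>w. integral\<^sup>L lborel (f w)) = besselK \<nu>" by (rule ext) (simp add: besselK_eq f_def[abs_def])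
  have e2: "integral\<^sup>L lborel f' = dK \<nu> w0" by (simp add: f'_def[abs_def] dK_def)
  show ?thesis using D unfolding e1 e2 by (simp add: has_real_derivative_iff_has_vector_derivative)
qed



lemma Gamma_plus1_pos: "(z::real) > 0 \<Longrightarrow> Gamma (z + 1) = z * Gamma z"
  by (rule Gamma_plus1) (auto dest: nonpos_Ints_nonpos)

lemma Gamma_ge_fact:
  fixes \<nu> :: real assumes nu: "\<nu> \<ge> 0"
  shows "Gamma (real m + \<nu> + 1) \<ge> Gamma (\<nu> + 1) * fact m"
proof (induction m)
  case 0 then show ?case by simp
next
  case (Suc m)
  have pos: "real m + \<nu> + 1 > 0" using nu by simp
  have "Gamma (real (Suc m) + \<nu> + 1) = (real m + \<nu> + 1) * Gamma (real m + \<nu> + 1)"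
    using Gamma_plus1_pos[OF pos] by (simp add: add_ac)
  also have "\<dots> \<ge> (real m + 1) * (Gamma (\<nu> + 1) * fact m)"
    using Suc.IH nu pos by (intro mult_mono) (auto intro: less_imp_le)
  finally show ?case by (simp add: algebra_simps)
qed

definition cI :: "real \<Rightarrow> nat \<Rightarrow> real" where
  "cI \<nu> m = 1 / (fact m * Gamma (real m + \<nu> + 1))"

definition SI :: "real \<Rightarrow> real \<Rightarrow> real" where
  "SI \<nu> w = (\<Sum>m. cI \<nu> m * w ^ m)"

definition dSI :: "real \<Rightarrow> real \<Rightarrow> real" where
  "dSI \<nu> w = (\<Sum>m. diffs (cI \<nu>) m * w ^ m)"

lemma cI_bounds:
  assumes nu: "\<nu> \<ge> 0"
  shows "0 \<le> cI \<nu> m" "cI \<nu> m \<le> inverse (Gamma (\<nu>+1)) * inverse (fact m)"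
    "0 \<le> diffs (cI \<nu>) m" "diffs (cI \<nu>) m \<le> inverse (Gamma (\<nu>+1)) * inverse (fact m)"
proof -
  have G: "Gamma (\<nu>+1) > 0" using nu by simp
  have g: "Gamma (real k + \<nu> + 1) \<ge> Gamma (\<nu> + 1)" for k
  proof -
    have "Gamma (\<nu> + 1) * 1 \<le> Gamma (\<nu> + 1) * fact k" using G by (intro mult_left_mono) auto
    then show ?thesis using Gamma_ge_fact[OF nu, of k] by simp
  qed
  have gp: "Gamma (real k + \<nu> + 1) > 0" for k using nu by (intro Gamma_real_pos) simp
  show "0 \<le> cI \<nu> m" unfolding cI_def using gp[of m] by simp
  show "cI \<nu> m \<le> inverse (Gamma (\<nu>+1)) * inverse (fact m)"
    unfolding cI_def using g[of m] G gp[of m]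
    by (simp add: field_simps divide_le_eq mult_left_mono)
  have d: "diffs (cI \<nu>) m = 1 / (fact m * Gamma (real (Suc m) + \<nu> + 1))"
    unfolding diffs_def cI_def by (simp add: fact_Suc del: of_nat_Suc)
  show "0 \<le> diffs (cI \<nu>) m" unfolding d using gp[of "Suc m"] by simp
  show "diffs (cI \<nu>) m \<le> inverse (Gamma (\<nu>+1)) * inverse (fact m)"
    unfolding d using g[of "Suc m"] G gp[of "Suc m"]
    by (simp add: field_simps divide_le_eq mult_left_mono)
qed

lemma series_gen:
  fixes c :: "nat \<Rightarrow> real"
  assumes c0: "\<And>m. 0 \<le> c m" and cb: "\<And>m. c m \<le> B * inverse (fact m)"
  shows "summable (\<lambda>m. c m * w ^ m)"
    and "0 \<le> w \<Longrightarrow> 0 \<le> (\<Sum>m. c m * w ^ m)"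
    and "0 \<le> w \<Longrightarrow> (\<Sum>m. c m * w ^ m) \<le> B * exp w"
proof -
  have se: "summable (\<lambda>m. B * (inverse (fact m) * x ^ m))" for x :: real
    by (intro summable_mult summable_exp)
  show sm: "summable (\<lambda>m. c m * w ^ m)"
  proof (rule summable_comparison_test'[OF se[of "\<bar>w\<bar>"]])
    fix m :: nat
    have "norm (c m * w ^ m) = c m * \<bar>w\<bar> ^ m" using c0[of m] by (simp add: abs_mult power_abs)
    also have "\<dots> \<le> B * inverse (fact m) * \<bar>w\<bar> ^ m" by (intro mult_right_mono cb) simp
    finally show "norm (c m * w ^ m) \<le> B * (inverse (fact m) * \<bar>w\<bar> ^ m)" by (simp add: mult_ac)
  qed
  assume w: "0 \<le> w"
  show "0 \<le> (\<Sum>m. c m * w ^ m)" by (intro suminf_nonneg sm) (use c0 w in simp)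
  have "(\<Sum>m. c m * w ^ m) \<le> (\<Sum>m. B * (inverse (fact m) * w ^ m))"
  proof (intro suminf_le sm se)
    fix m
    have "c m * w ^ m \<le> (B * inverse (fact m)) * w ^ m" by (intro mult_right_mono cb) (use w in simp)
    then show "c m * w ^ m \<le> B * (inverse (fact m) * w ^ m)" by (simp add: mult_ac)
  qed
  also have "\<dots> = B * (\<Sum>m. inverse (fact m) * w ^ m)"
    by (rule suminf_mult) (rule summable_exp)
  also have "(\<Sum>m. inverse (fact m) * w ^ m) = exp w"
    using sums_unique[OF exp_converges[of w]] by (simp add: divide_inverse mult.commute)
  finally show "(\<Sum>m. c m * w ^ m) \<le> B * exp w" .
qed

lemma SI_props:
  assumes nu: "\<nu> \<ge> 0"
  shows "summable (\<lambda>m. cI \<nu> m * w ^ m)" "summable (\<lambda>m. diffs (cI \<nu>) m * w ^ m)"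
    "0 \<le> w \<Longrightarrow> 0 \<le> SI \<nu> w" "0 \<le> w \<Longrightarrow> SI \<nu> w \<le> exp w / Gamma (\<nu>+1)"
    "0 \<le> w \<Longrightarrow> 0 \<le> dSI \<nu> w" "0 \<le> w \<Longrightarrow> dSI \<nu> w \<le> exp w / Gamma (\<nu>+1)"
    "(SI \<nu> has_real_derivative dSI \<nu> w) (at w)"
proof -
  note A = series_gen[of "cI \<nu>" "inverse (Gamma (\<nu>+1))", OF cI_bounds(1,2)[OF nu]]
  note B = series_gen[of "diffs (cI \<nu>)" "inverse (Gamma (\<nu>+1))", OF cI_bounds(3,4)[OF nu]]
  show "summable (\<lambda>m. cI \<nu> m * w ^ m)" "summable (\<lambda>m. diffs (cI \<nu>) m * w ^ m)"
    using A(1) B(1) by auto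
  show "0 \<le> w \<Longrightarrow> 0 \<le> SI \<nu> w" "0 \<le> w \<Longrightarrow> SI \<nu> w \<le> exp w / Gamma (\<nu>+1)"
    "0 \<le> w \<Longrightarrow> 0 \<le> dSI \<nu> w" "0 \<le> w \<Longrightarrow> dSI \<nu> w \<le> exp w / Gamma (\<nu>+1)"
    using A(2,3) B(2,3) unfolding SI_def dSI_def by (auto simp: divide_inverse mult.commute)
  have "DERIV (\<lambda>x. \<Sum>n. cI \<nu> n * x ^ n) w :> (\<Sum>n. diffs (cI \<nu>) n * w ^ n)"
    by (rule termdiffs_strong[OF A(1)[of "\<bar>w\<bar> + 1"]]) simp
  then show "(SI \<nu> has_real_derivative dSI \<nu> w) (at w)"
    unfolding SI_def[abs_def] dSI_def .
qed

lemma besselI_eq: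
  assumes z: "z > 0" and nu: "\<nu> \<ge> 0"
  shows "besselI \<nu> z = (z/2) powr \<nu> * SI \<nu> ((z/2)^2)"
proof -
  have t: "(z/2) powr (2 * real m + \<nu>) / (fact m * Gamma (real m + \<nu> + 1)) = (z/2) powr \<nu> * (cI \<nu> m * ((z/2)^2) ^ m)" for m
  proof -
    have a: "(z/2) powr (2 * real m + \<nu>) = (z/2) powr (2 * real m) * (z/2) powr \<nu>"
      by (simp add: powr_add)
    have b: "(z/2) powr (2 * real m) = ((z/2)^2) ^ m"
      using powr_realpow[of "z/2" "2*m"] z by (simp add: power_mult)
    show ?thesis by (simp add: a b cI_def)
  qed
  show ?thesis unfolding besselI_def t SI_def
    by (rule suminf_mult[OF SI_props(1)[OF nu]])
qed

definition dI :: "real \<Rightarrow> real \<Rightarrow> real" where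
  "dI \<nu> z = \<nu> * (z/2) powr (\<nu>-1) * (1/2) * SI \<nu> ((z/2)^2) + dSI \<nu> ((z/2)^2) * (z/2) * (z/2) powr \<nu>"

lemma I_deriv:
  assumes z: "z > 0" and nu: "\<nu> \<ge> 0"
  shows "(besselI \<nu> has_real_derivative dI \<nu> z) (at z)"
proof -
  have d1: "((\<lambda>z. (z/2) powr \<nu>) has_real_derivative \<nu> * (z/2) powr (\<nu>-1) * (1/2)) (at z)"
  proof -
    have h1: "((\<lambda>z. z powr \<nu>) has_real_derivative \<nu> * (z/2) powr (\<nu>-1)) (at (z/2))"
      using has_real_derivative_powr[of "z/2" \<nu>] z by simp
    have h2: "((\<lambda>z. z/2) has_real_derivative 1/2) (at z)" by (auto intro!: derivative_eq_intros)
    from DERIV_chain2[where g="\<lambda>z. z/2" and x=z, OF h1 h2] show ?thesis by simp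
  qed
  have d2: "((\<lambda>z. SI \<nu> ((z/2)^2)) has_real_derivative dSI \<nu> ((z/2)^2) * (z/2)) (at z)"
  proof -
    have "((\<lambda>z. (z/2)^2) has_real_derivative (z/2)) (at z)"
      by (auto intro!: derivative_eq_intros)
    from DERIV_chain2[OF SI_props(7)[OF nu] this] show ?thesis .
  qed
  have "((\<lambda>z. (z/2) powr \<nu> * SI \<nu> ((z/2)^2)) has_real_derivative dI \<nu> z) (at z)"
    using DERIV_mult[OF d1 d2] by (simp add: dI_def)
  then show ?thesis
  proof (rule has_field_derivative_transform_within_open[where S="{0<..}"])
    show "open ({0<..} :: real set)" by simp
    show "z \<in> {0<..}" using z by simp
    show "(x/2) powr \<nu> * SI \<nu> ((x/2)^2) = besselI \<nu> x" if "x \<in> {0<..}" for x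
      using besselI_eq[of x \<nu>] that nu by simp
  qed
qed

lemma I_bounds:
  assumes z: "z > 0" and nu: "\<nu> \<ge> 0"
  shows "0 \<le> besselI \<nu> z" "besselI \<nu> z \<le> (z/2) powr \<nu> * (exp ((z/2)^2) / Gamma (\<nu>+1))"
    "0 \<le> z * dI \<nu> z" "z * dI \<nu> z \<le> (z/2) powr \<nu> * (exp ((z/2)^2) / Gamma (\<nu>+1)) * (\<nu> + z^2/2)"
proof -
  define w where "w = (z/2)^2"
  have w0: "w \<ge> 0" by (simp add: w_def)
  have P: "(z/2) powr \<nu> \<ge> 0" by simp
  note S = SI_props[OF nu]
  show "0 \<le> besselI \<nu> z" unfolding besselI_eq[OF z nu] using S(3)[OF w0] by (simp add: w_def)
  show "besselI \<nu> z \<le> (z/2) powr \<nu> * (exp ((z/2)^2) / Gamma (\<nu>+1))"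
    unfolding besselI_eq[OF z nu] using mult_left_mono[OF S(4)[OF w0] P] by (simp add: w_def)
  have e: "z * dI \<nu> z = (z/2) powr \<nu> * (\<nu> * SI \<nu> w + dSI \<nu> w * (z^2/2))"
  proof -
    have "(z/2) * (z/2) powr (\<nu>-1) = (z/2) powr \<nu>" using z by (intro pw_shift) simp
    then have "z * (\<nu> * (z/2) powr (\<nu>-1) * (1/2)) = \<nu> * (z/2) powr \<nu>" by (simp add: field_simps)
    note h = this
    have "z * dI \<nu> z = (z * (\<nu> * (z/2) powr (\<nu>-1) * (1/2))) * SI \<nu> w + (z * (z/2)) * dSI \<nu> w * (z/2) powr \<nu>"
      unfolding dI_def w_def by (simp only: distrib_left mult_ac)
    also have "\<dots> = (z/2) powr \<nu> * (\<nu> * SI \<nu> w + dSI \<nu> w * (z^2/2))"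
      unfolding h by (simp add: algebra_simps power2_eq_square)
    finally show ?thesis .
  qed
  show "0 \<le> z * dI \<nu> z" unfolding e using S(3,5)[OF w0] nu P by simp
  have "\<nu> * SI \<nu> w + dSI \<nu> w * (z^2/2) \<le> \<nu> * (exp w / Gamma (\<nu>+1)) + (exp w / Gamma (\<nu>+1)) * (z^2/2)"
    using S(4,6)[OF w0] nu by (intro add_mono mult_left_mono mult_right_mono) auto
  also have "\<dots> = (exp w / Gamma (\<nu>+1)) * (\<nu> + z^2/2)" by (simp add: algebra_simps)
  finally have "\<nu> * SI \<nu> w + dSI \<nu> w * (z^2/2) \<le> (exp w / Gamma (\<nu>+1)) * (\<nu> + z^2/2)" .
  from mult_left_mono[OF this P]
  show "z * dI \<nu> z \<le> (z/2) powr \<nu> * (exp ((z/2)^2) / Gamma (\<nu>+1)) * (\<nu> + z^2/2)"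
    unfolding e w_def by (simp only: mult.assoc)
qed



lemma pow_ratio: "0 < (a::real) \<Longrightarrow> 0 < b \<Longrightarrow> (a/2) powr \<nu> * (b/2) powr (-\<nu>) = (a/b) powr \<nu>"
  by (simp add: powr_def ln_div exp_add[symmetric] algebra_simps)

lemma PB:
  fixes a b \<nu> \<beta> :: real
  assumes a: "0 < a" "a \<le> b" "a \<le> \<beta>" and nu: "1 \<le> \<nu>"
  shows "0 \<le> besselI \<nu> a * besselK \<nu> b"
    "besselI \<nu> a * besselK \<nu> b \<le> exp (\<beta>^2/4) / \<nu> * (a/b) powr \<nu>"
    "0 \<le> (a * dI \<nu> a) * besselK \<nu> b"
    "(a * dI \<nu> a) * besselK \<nu> b \<le> exp (\<beta>^2/4) * (\<nu> + \<beta>^2/2) / \<nu> * (a/b) powr \<nu>"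
    "\<bar>besselI \<nu> a * (b * dK \<nu> b)\<bar> \<le> 2 * exp (\<beta>^2/4) * (a/b) powr \<nu>"
proof -
  have b: "0 < b" using a by simp
  have nu0: "0 < \<nu>" "0 \<le> \<nu>" using nu by auto
  have G: "Gamma (\<nu>+1) = \<nu> * Gamma \<nu>" using Gamma_plus1_pos[OF nu0(1)] .
  have Gp: "Gamma \<nu> > 0" using nu0 by simp
  have Gn: "Gamma \<nu> \<noteq> 0" using Gp by simp
  have E: "exp ((a/2)^2) \<le> exp (\<beta>^2/4)"
    using a by (simp add: power_divide power_mono)
  note IB = I_bounds[OF a(1) nu0(2)]
  note KB = K_bound[OF b nu0(1)]
  show "0 \<le> besselI \<nu> a * besselK \<nu> b" using IB(1) KB(3) by simp
  have r: "(a/2) powr \<nu> * (b/2) powr (-\<nu>) = (a/b) powr \<nu>" by (rule pow_ratio) (use a b in auto)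
  have "besselI \<nu> a * besselK \<nu> b \<le> ((a/2) powr \<nu> * (exp ((a/2)^2) / Gamma (\<nu>+1))) * ((b/2) powr (-\<nu>) * Gamma \<nu>)"
    using IB(1,2) KB(2,3) by (intro mult_mono) auto
  also have "\<dots> = exp ((a/2)^2) / \<nu> * (a/b) powr \<nu>"
    unfolding r[symmetric] G using Gp Gn nu0 by (simp add: field_simps)
  also have "\<dots> \<le> exp (\<beta>^2/4) / \<nu> * (a/b) powr \<nu>"
    using E nu0 by (intro mult_right_mono divide_right_mono) auto
  finally show "besselI \<nu> a * besselK \<nu> b \<le> exp (\<beta>^2/4) / \<nu> * (a/b) powr \<nu>" .
  show "0 \<le> (a * dI \<nu> a) * besselK \<nu> b" using IB(3) KB(3) by simp
  have "(a * dI \<nu> a) * besselK \<nu> b \<le> ((a/2) powr \<nu> * (exp ((a/2)^2) / Gamma (\<nu>+1)) * (\<nu> + a^2/2)) * ((b/2) powr (-\<nu>) * Gamma \<nu>)"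
    by (rule mult_mono[OF IB(4) KB(2) order_trans[OF IB(3) IB(4)] KB(3)])
  also have "\<dots> = exp ((a/2)^2) * (\<nu> + a^2/2) / \<nu> * (a/b) powr \<nu>"
    unfolding r[symmetric] G using Gp Gn nu0 by (simp add: field_simps)
  also have "\<dots> \<le> exp (\<beta>^2/4) * (\<nu> + \<beta>^2/2) / \<nu> * (a/b) powr \<nu>"
    using E nu0 a by (intro mult_right_mono divide_right_mono mult_mono add_left_mono divide_right_mono power_mono) auto
  finally show "(a * dI \<nu> a) * besselK \<nu> b \<le> exp (\<beta>^2/4) * (\<nu> + \<beta>^2/2) / \<nu> * (a/b) powr \<nu>" .
  have "\<bar>besselI \<nu> a * (b * dK \<nu> b)\<bar> = besselI \<nu> a * (b * \<bar>dK \<nu> b\<bar>)"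
    using IB(1) b by (simp add: abs_mult)
  also have "\<dots> \<le> ((a/2) powr \<nu> * (exp ((a/2)^2) / Gamma (\<nu>+1))) * (b * ((b/2) powr (-(\<nu>+1)) * Gamma (\<nu>+1)))"
    using IB(1,2) dK_bound[OF b nu0(1)] b by (intro mult_mono mult_left_mono) auto
  also have "\<dots> = 2 * exp ((a/2)^2) * (a/b) powr \<nu>"
  proof -
    have e: "-(\<nu>+1) = -\<nu> + -1" by simp
    have "(b/2) powr (-(\<nu>+1)) = (b/2) powr (-\<nu>) * (b/2) powr (-1)" unfolding e by (rule powr_add)
    then have bq: "b * (b/2) powr (-(\<nu>+1)) = 2 * (b/2) powr (-\<nu>)" using b by (simp add: powr_minus field_simps)
    have "b * ((b/2) powr (-(\<nu>+1)) * Gamma (\<nu>+1)) = (2 * (b/2) powr (-\<nu>)) * Gamma (\<nu>+1)"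
      unfolding bq[symmetric] by (simp only: mult.assoc)
    then show ?thesis unfolding r[symmetric] using Gp Gn nu0 G by (simp add: field_simps)
  qed
  also have "\<dots> \<le> 2 * exp (\<beta>^2/4) * (a/b) powr \<nu>"
    using E by (intro mult_right_mono mult_left_mono) auto
  finally show "\<bar>besselI \<nu> a * (b * dK \<nu> b)\<bar> \<le> 2 * exp (\<beta>^2/4) * (a/b) powr \<nu>" .
qed



definition dk2 :: "real \<Rightarrow> real \<Rightarrow> real \<Rightarrow> real \<Rightarrow> real" where
  "dk2 \<nu> \<beta> s y = (if y \<le> s then sqrt y * besselI \<nu> (\<beta> * y) * (besselK \<nu> (\<beta> * s) / (2 * sqrt s) + sqrt s * (dK \<nu> (\<beta> * s) * \<beta>))
     else sqrt y * besselK \<nu> (\<beta> * y) * (besselI \<nu> (\<beta> * s) / (2 * sqrt s) + sqrt s * (dI \<nu> (\<beta> * s) * \<beta>)))"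

lemma k2_meas: "kernel2 \<nu> \<beta> s \<in> borel_measurable lborel"
  unfolding kernel2_def besselK_def besselI_def set_lebesgue_integral_def by measurable

lemma dk2_meas: "dk2 \<nu> \<beta> s \<in> borel_measurable lborel"
  unfolding dk2_def besselK_def besselI_def set_lebesgue_integral_def dK_def dI_def SI_def dSI_def by measurable

lemma hA:
  assumes y: "0 < y" "y \<le> s" "y \<le> 1" and d: "0 < \<delta>" and nu: "3/2 + \<delta> \<le> \<nu>"
  shows "sqrt (s*y) * (y/s) powr \<nu> \<le> s powr (-1-\<delta>)"
proof -
  have s: "s > 0" using y by simp
  have "sqrt (s*y) * (y/s) powr \<nu> = y powr (\<nu>+1/2) * s powr (1/2-\<nu>)"
    using s y by (simp add: powr_half_sqrt[symmetric] powr_def ln_mult ln_div exp_add[symmetric] algebra_simps)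
  then show ?thesis using hb1[OF y d nu] by simp
qed

lemma hB:
  assumes y: "0 < s" "s < y" "y \<le> 1" and d: "0 < \<delta>" and nu: "3/2 + \<delta> \<le> \<nu>"
  shows "sqrt (s*y) * (s/y) powr \<nu> \<le> s powr (-1-\<delta>)"
proof -
  have yp: "y > 0" using y by simp
  have "sqrt (s*y) * (s/y) powr \<nu> = y powr (1/2-\<nu>) * s powr (\<nu>+1/2)"
    using yp y by (simp add: powr_half_sqrt[symmetric] powr_def ln_mult ln_div exp_add[symmetric] algebra_simps)
  then show ?thesis using hb2[OF y d nu] by simp
qed

lemma I_cont: assumes "\<nu> \<ge> 0" "\<beta> > 0" shows "continuous_on {0<..} (\<lambda>t. besselI \<nu> (\<beta> * t))"
proof (intro continuous_at_imp_continuous_on ballI)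
  fix t :: real assume t: "t \<in> {0<..}"
  have "isCont (besselI \<nu>) (\<beta> * t)" by (rule DERIV_isCont[OF I_deriv]) (use assms t in auto)
  then show "isCont (\<lambda>t. besselI \<nu> (\<beta> * t)) t"
    by (intro isCont_o2[where f="\<lambda>t. \<beta> * t" and g="besselI \<nu>"]) (auto intro!: continuous_intros)
qed

lemma K_cont: assumes "\<nu> > 0" "\<beta> > 0" shows "continuous_on {0<..} (\<lambda>t. besselK \<nu> (\<beta> * t))"
proof (intro continuous_at_imp_continuous_on ballI)
  fix t :: real assume t: "t \<in> {0<..}"
  have "isCont (besselK \<nu>) (\<beta> * t)" by (rule DERIV_isCont[OF K_deriv]) (use assms t in auto)
  then show "isCont (\<lambda>t. besselK \<nu> (\<beta> * t)) t"
    by (intro isCont_o2[where f="\<lambda>t. \<beta> * t" and g="besselK \<nu>"]) (auto intro!: continuous_intros)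
qed



lemma k2_bound:
  assumes b: "\<beta> > 0" and d: "\<delta> > 0" and nu: "3/2 + \<delta> \<le> \<nu>" and x: "x > 0" and y: "0 < y" "y \<le> 1"
  shows "\<bar>kernel2 \<nu> \<beta> x y\<bar> \<le> exp (\<beta>^2/4) / \<nu> * x powr (-1-\<delta>)"
proof -
  have nu1: "1 \<le> \<nu>" using nu d by simp
  have nu0: "\<nu> > 0" using nu1 by simp
  show ?thesis
  proof (cases "y \<le> x")
    case True
    note P = PB[of "\<beta>*y" "\<beta>*x" \<beta> \<nu>]
    have c: "0 < \<beta>*y" "\<beta>*y \<le> \<beta>*x" "\<beta>*y \<le> \<beta>" using b y True by (auto simp: mult_left_mono)
    have r: "(\<beta>*y)/(\<beta>*x) = y/x" using b by simp
    have k: "kernel2 \<nu> \<beta> x y = sqrt (x*y) * (besselI \<nu> (\<beta>*y) * besselK \<nu> (\<beta>*x))"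
      using True by (simp add: kernel2_def mult_ac)
    have "\<bar>kernel2 \<nu> \<beta> x y\<bar> = sqrt (x*y) * (besselI \<nu> (\<beta>*y) * besselK \<nu> (\<beta>*x))"
      unfolding k by (rule abs_of_nonneg[OF mult_nonneg_nonneg[OF _ P(1)[OF c nu1]]]) (use x y in simp)
    also have "\<dots> \<le> sqrt (x*y) * (exp (\<beta>^2/4) / \<nu> * (y/x) powr \<nu>)"
      using P(2)[OF c nu1] x y unfolding r by (intro mult_left_mono) auto
    also have "\<dots> = exp (\<beta>^2/4) / \<nu> * (sqrt (x*y) * (y/x) powr \<nu>)" by simp
    also have "\<dots> \<le> exp (\<beta>^2/4) / \<nu> * x powr (-1-\<delta>)"
      using hA[OF y(1) True y(2) d nu] nu0 by (intro mult_left_mono) auto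
    finally show ?thesis .
  next
    case False
    note P = PB[of "\<beta>*x" "\<beta>*y" \<beta> \<nu>]
    have c: "0 < \<beta>*x" "\<beta>*x \<le> \<beta>*y" "\<beta>*x \<le> \<beta>" using b x y False by (auto simp: mult_left_mono)
    have r: "(\<beta>*x)/(\<beta>*y) = x/y" using b by simp
    have k: "kernel2 \<nu> \<beta> x y = sqrt (x*y) * (besselI \<nu> (\<beta>*x) * besselK \<nu> (\<beta>*y))"
      using False by (simp add: kernel2_def mult_ac)
    have "\<bar>kernel2 \<nu> \<beta> x y\<bar> = sqrt (x*y) * (besselI \<nu> (\<beta>*x) * besselK \<nu> (\<beta>*y))"
      unfolding k by (rule abs_of_nonneg[OF mult_nonneg_nonneg[OF _ P(1)[OF c nu1]]]) (use x y in simp)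
    also have "\<dots> \<le> sqrt (x*y) * (exp (\<beta>^2/4) / \<nu> * (x/y) powr \<nu>)"
      using P(2)[OF c nu1] x y unfolding r by (intro mult_left_mono) auto
    also have "\<dots> = exp (\<beta>^2/4) / \<nu> * (sqrt (x*y) * (x/y) powr \<nu>)" by simp
    also have "\<dots> \<le> exp (\<beta>^2/4) / \<nu> * x powr (-1-\<delta>)"
      using hB[OF x _ y(2) d nu] False nu0 by (intro mult_left_mono) auto
    finally show ?thesis .
  qed
qed

lemma dk2_id1:
  assumes s: "s > 0" and y: "y > 0" and ys: "y \<le> s"
  shows "s * dk2 \<nu> \<beta> s y = sqrt (s*y) * ((besselI \<nu> (\<beta>*y) * besselK \<nu> (\<beta> * s)) / 2 + besselI \<nu> (\<beta>*y) * ((\<beta> * s) * dK \<nu> (\<beta> * s)))"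
proof -
  have q: "sqrt s * sqrt s = s" using s by simp
  have "s * dk2 \<nu> \<beta> s y = sqrt y * besselI \<nu> (\<beta>*y) * (s / (2 * sqrt s) * besselK \<nu> (\<beta> * s) + (s * sqrt s) * (dK \<nu> (\<beta> * s) * \<beta>))"
    using ys by (simp add: dk2_def algebra_simps)
  also have "s / (2 * sqrt s) = sqrt s / 2" using s q by (simp add: field_simps)
  finally show ?thesis using s y by (simp add: real_sqrt_mult algebra_simps)
qed

lemma dk2_id2:
  assumes s: "s > 0" and y: "y > 0" and ys: "\<not> y \<le> s"
  shows "s * dk2 \<nu> \<beta> s y = sqrt (s*y) * ((besselI \<nu> (\<beta> * s) * besselK \<nu> (\<beta>*y)) / 2 + ((\<beta> * s) * dI \<nu> (\<beta> * s)) * besselK \<nu> (\<beta>*y))"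
proof -
  have q: "sqrt s * sqrt s = s" using s by simp
  have "s * dk2 \<nu> \<beta> s y = sqrt y * besselK \<nu> (\<beta>*y) * (s / (2 * sqrt s) * besselI \<nu> (\<beta> * s) + (s * sqrt s) * (dI \<nu> (\<beta> * s) * \<beta>))"
    using ys by (simp add: dk2_def algebra_simps)
  also have "s / (2 * sqrt s) = sqrt s / 2" using s q by (simp add: field_simps)
  finally show ?thesis using s y by (simp add: real_sqrt_mult algebra_simps)
qed

lemma dk2_bound:
  assumes b: "\<beta> > 0" and d: "\<delta> > 0" and nu: "3/2 + \<delta> \<le> \<nu>" and s: "s > 0" and y: "0 < y" "y \<le> 1"
  shows "\<bar>s * dk2 \<nu> \<beta> s y\<bar> \<le> exp (\<beta>^2/4) * (3 + \<beta>^2) * s powr (-1-\<delta>)"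
proof -
  have nu1: "1 \<le> \<nu>" using nu d by simp
  have nu0: "\<nu> > 0" using nu1 by simp
  define E where "E = exp (\<beta>^2/4)"
  have E0: "E > 0" by (simp add: E_def)
  have inv: "1/\<nu> \<le> 1" using nu1 by simp
  have sq0: "sqrt (s*y) \<ge> 0" using s y by simp
  show ?thesis
  proof (cases "y \<le> s")
    case True
    note P = PB[of "\<beta>*y" "\<beta> * s" \<beta> \<nu>]
    have c: "0 < \<beta>*y" "\<beta>*y \<le> \<beta> * s" "\<beta>*y \<le> \<beta>" using b y True by (auto simp: mult_left_mono)
    have r: "(\<beta>*y)/(\<beta> * s) = y/s" using b by simp
    define R where "R = (y/s) powr \<nu>"
    have R0: "R \<ge> 0" by (simp add: R_def)
    have "\<bar>(besselI \<nu> (\<beta>*y) * besselK \<nu> (\<beta> * s)) / 2 + besselI \<nu> (\<beta>*y) * ((\<beta> * s) * dK \<nu> (\<beta> * s))\<bar>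
        \<le> \<bar>besselI \<nu> (\<beta>*y) * besselK \<nu> (\<beta> * s)\<bar> / 2 + \<bar>besselI \<nu> (\<beta>*y) * ((\<beta> * s) * dK \<nu> (\<beta> * s))\<bar>"
      by (rule order_trans[OF abs_triangle_ineq]) simp
    also have "\<dots> \<le> (E / \<nu> * R) / 2 + 2 * E * R"
      using P(1,2,5)[OF c nu1] unfolding r R_def E_def by (intro add_mono divide_right_mono) auto
    also have "\<dots> \<le> (E * R) / 2 + 2 * E * R"
    proof -
      have "E / \<nu> * R \<le> E * R" using mult_right_mono[OF inv, of "E*R"] E0 R0 by simp
      then show ?thesis by simp
    qed
    also have "\<dots> \<le> E * (3 + \<beta>^2) * R" using E0 R0 by (simp add: field_simps mult_left_mono mult_right_mono)
    finally have A: "\<bar>(besselI \<nu> (\<beta>*y) * besselK \<nu> (\<beta> * s)) / 2 + besselI \<nu> (\<beta>*y) * ((\<beta> * s) * dK \<nu> (\<beta> * s))\<bar> \<le> E * (3 + \<beta>^2) * R" .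
    have "\<bar>s * dk2 \<nu> \<beta> s y\<bar> = sqrt (s*y) * \<bar>(besselI \<nu> (\<beta>*y) * besselK \<nu> (\<beta> * s)) / 2 + besselI \<nu> (\<beta>*y) * ((\<beta> * s) * dK \<nu> (\<beta> * s))\<bar>"
      unfolding dk2_id1[OF s y(1) True] using sq0 by (simp add: abs_mult)
    also have "\<dots> \<le> sqrt (s*y) * (E * (3 + \<beta>^2) * R)" by (intro mult_left_mono A sq0)
    also have "\<dots> = E * (3 + \<beta>^2) * (sqrt (s*y) * R)" by simp
    also have "\<dots> \<le> E * (3 + \<beta>^2) * s powr (-1-\<delta>)"
      using hA[OF y(1) True y(2) d nu] E0 unfolding R_def by (intro mult_left_mono) auto
    finally show ?thesis by (simp add: E_def)
  next
    case False
    note P = PB[of "\<beta> * s" "\<beta>*y" \<beta> \<nu>]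
    have c: "0 < \<beta> * s" "\<beta> * s \<le> \<beta>*y" "\<beta> * s \<le> \<beta>" using b s y False by (auto simp: mult_left_mono)
    have r: "(\<beta> * s)/(\<beta>*y) = s/y" using b by simp
    define R where "R = (s/y) powr \<nu>"
    have R0: "R \<ge> 0" by (simp add: R_def)
    have T0: "0 \<le> (besselI \<nu> (\<beta> * s) * besselK \<nu> (\<beta>*y)) / 2 + ((\<beta> * s) * dI \<nu> (\<beta> * s)) * besselK \<nu> (\<beta>*y)"
      using P(1,3)[OF c nu1] by simp
    have "(besselI \<nu> (\<beta> * s) * besselK \<nu> (\<beta>*y)) / 2 + ((\<beta> * s) * dI \<nu> (\<beta> * s)) * besselK \<nu> (\<beta>*y)
        \<le> (E / \<nu> * R) / 2 + E * (\<nu> + \<beta>^2/2) / \<nu> * R"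
      using P(2,4)[OF c nu1] unfolding r R_def E_def by (intro add_mono divide_right_mono) auto
    also have "\<dots> = E * R * (1/(2*\<nu>) + 1 + \<beta>^2/(2*\<nu>))" using nu0 by (simp add: field_simps)
    also have "\<dots> \<le> E * R * (3 + \<beta>^2)"
    proof -
      have "1/(2*\<nu>) \<le> 1" using nu1 by simp
      moreover have "\<beta>^2/(2*\<nu>) \<le> \<beta>^2/1" using nu1 by (intro divide_left_mono) auto
      ultimately have "1/(2*\<nu>) + 1 + \<beta>^2/(2*\<nu>) \<le> 3 + \<beta>^2" by simp
      then show ?thesis using E0 R0 by (intro mult_left_mono) auto
    qed
    finally have A: "(besselI \<nu> (\<beta> * s) * besselK \<nu> (\<beta>*y)) / 2 + ((\<beta> * s) * dI \<nu> (\<beta> * s)) * besselK \<nu> (\<beta>*y) \<le> E * (3 + \<beta>^2) * R"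
      by (simp add: mult_ac)
    have "\<bar>s * dk2 \<nu> \<beta> s y\<bar> = sqrt (s*y) * ((besselI \<nu> (\<beta> * s) * besselK \<nu> (\<beta>*y)) / 2 + ((\<beta> * s) * dI \<nu> (\<beta> * s)) * besselK \<nu> (\<beta>*y))"
      unfolding dk2_id2[OF s y(1) False] using sq0 T0 by (simp add: abs_mult)
    also have "\<dots> \<le> sqrt (s*y) * (E * (3 + \<beta>^2) * R)" by (intro mult_left_mono A sq0)
    also have "\<dots> = E * (3 + \<beta>^2) * (sqrt (s*y) * R)" by simp
    also have "\<dots> \<le> E * (3 + \<beta>^2) * s powr (-1-\<delta>)"
      using hB[OF s _ y(2) d nu] False E0 unfolding R_def by (intro mult_left_mono) auto
    finally show ?thesis by (simp add: E_def)
  qed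
qed



lemma k2_deriv:
  assumes b: "\<beta> > 0" and nu: "\<nu> > 0" and s: "s > 0" and y: "0 < y" and sy: "s \<noteq> y"
  shows "((\<lambda>s. kernel2 \<nu> \<beta> s y) has_real_derivative dk2 \<nu> \<beta> s y) (at s)"
proof (cases "y < s")
  case True
  have dK: "((\<lambda>t. besselK \<nu> (\<beta> * t)) has_real_derivative dK \<nu> (\<beta> * s) * \<beta>) (at s)"
  proof -
    have h2: "((\<lambda>t. \<beta> * t) has_real_derivative \<beta>) (at s)" by (auto intro!: derivative_eq_intros)
    from DERIV_chain2[where g="\<lambda>t. \<beta> * t" and x=s, OF K_deriv h2] b s nu show ?thesis by simp
  qed
  have "((\<lambda>t. sqrt y * besselI \<nu> (\<beta> * y) * (sqrt t * besselK \<nu> (\<beta> * t))) has_real_derivative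
        sqrt y * besselI \<nu> (\<beta> * y) * (inverse (sqrt s) / 2 * besselK \<nu> (\<beta> * s) + sqrt s * (dK \<nu> (\<beta> * s) * \<beta>))) (at s)"
  proof (rule DERIV_cmult)
    show "((\<lambda>t. sqrt t * besselK \<nu> (\<beta> * t)) has_real_derivative inverse (sqrt s) / 2 * besselK \<nu> (\<beta> * s) + sqrt s * (dK \<nu> (\<beta> * s) * \<beta>)) (at s)"
      using DERIV_mult[OF DERIV_real_sqrt[OF s] dK] by (simp add: mult_ac)
  qed
  note dd = this
  have dkeq: "dk2 \<nu> \<beta> s y = sqrt y * besselI \<nu> (\<beta> * y) * (inverse (sqrt s) / 2 * besselK \<nu> (\<beta> * s) + sqrt s * (dK \<nu> (\<beta> * s) * \<beta>))"
    using True by (simp add: dk2_def field_simps)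
  show ?thesis unfolding dkeq
  proof (rule has_field_derivative_transform_within_open[OF dd, where S="{y<..}"])
    show "open {y<..}" by simp
    show "s \<in> {y<..}" using True by simp
    show "sqrt y * besselI \<nu> (\<beta> * y) * (sqrt t * besselK \<nu> (\<beta> * t)) = kernel2 \<nu> \<beta> t y" if "t \<in> {y<..}" for t
      using that y by (simp add: kernel2_def real_sqrt_mult mult_ac)
  qed
next
  case False
  then have ys: "s < y" using sy by simp
  have dI: "((\<lambda>t. besselI \<nu> (\<beta> * t)) has_real_derivative dI \<nu> (\<beta> * s) * \<beta>) (at s)"
  proof -
    have h2: "((\<lambda>t. \<beta> * t) has_real_derivative \<beta>) (at s)" by (auto intro!: derivative_eq_intros)
    from DERIV_chain2[where g="\<lambda>t. \<beta> * t" and x=s, OF I_deriv h2] b s nu show ?thesis by simp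
  qed
  have "((\<lambda>t. sqrt y * besselK \<nu> (\<beta> * y) * (sqrt t * besselI \<nu> (\<beta> * t))) has_real_derivative
        sqrt y * besselK \<nu> (\<beta> * y) * (inverse (sqrt s) / 2 * besselI \<nu> (\<beta> * s) + sqrt s * (dI \<nu> (\<beta> * s) * \<beta>))) (at s)"
  proof (rule DERIV_cmult)
    show "((\<lambda>t. sqrt t * besselI \<nu> (\<beta> * t)) has_real_derivative inverse (sqrt s) / 2 * besselI \<nu> (\<beta> * s) + sqrt s * (dI \<nu> (\<beta> * s) * \<beta>)) (at s)"
      using DERIV_mult[OF DERIV_real_sqrt[OF s] dI] by (simp add: mult_ac)
  qed
  note dd = this
  have dkeq: "dk2 \<nu> \<beta> s y = sqrt y * besselK \<nu> (\<beta> * y) * (inverse (sqrt s) / 2 * besselI \<nu> (\<beta> * s) + sqrt s * (dI \<nu> (\<beta> * s) * \<beta>))"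
    using ys by (simp add: dk2_def field_simps)
  show ?thesis unfolding dkeq
  proof (rule has_field_derivative_transform_within_open[OF dd, where S="{0<..<y}"])
    show "open {0<..<y}" by simp
    show "s \<in> {0<..<y}" using ys s by simp
    show "sqrt y * besselK \<nu> (\<beta> * y) * (sqrt t * besselI \<nu> (\<beta> * t)) = kernel2 \<nu> \<beta> t y" if "t \<in> {0<..<y}" for t
      using that y by (simp add: kernel2_def real_sqrt_mult mult_ac)
  qed
qed

lemma k2_cont:
  assumes b: "\<beta> > 0" and nu: "\<nu> > 0" and y: "0 < y"
  shows "continuous_on {0<..} (\<lambda>s. kernel2 \<nu> \<beta> s y)"
proof -
  have c1: "continuous_on {0<..} (\<lambda>t. besselI \<nu> (\<beta> * t))" using I_cont[of \<nu> \<beta>] b nu by simp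
  have c2: "continuous_on {0<..} (\<lambda>t. besselK \<nu> (\<beta> * t))" using K_cont[of \<nu> \<beta>] b nu by simp
  have "continuous_on {0<..} (\<lambda>s. if -s \<le> -y then sqrt (s * y) * besselI \<nu> (\<beta> * y) * besselK \<nu> (\<beta> * s)
                                   else sqrt (s * y) * besselI \<nu> (\<beta> * s) * besselK \<nu> (\<beta> * y))"
  proof (rule continuous_on_cases_le)
    show "continuous_on {t \<in> {0<..}. - t \<le> - y} (\<lambda>s. sqrt (s * y) * besselI \<nu> (\<beta> * y) * besselK \<nu> (\<beta> * s))"
      by (intro continuous_intros continuous_on_subset[OF c2]) auto
    show "continuous_on {t \<in> {0<..}. - y \<le> - t} (\<lambda>s. sqrt (s * y) * besselI \<nu> (\<beta> * s) * besselK \<nu> (\<beta> * y))"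
      by (intro continuous_intros continuous_on_subset[OF c1]) auto
  qed (auto intro!: continuous_intros)
  then show ?thesis
    by (rule continuous_on_cong[THEN iffD1, rotated 2]) (auto simp: kernel2_def)
qed



lemma part2:
  fixes \<delta> :: real
  assumes d: "\<delta> > 0"
  shows "\<forall>\<beta>>0. \<exists>C>0. \<forall>\<nu> u. \<nu> \<ge> 3/2 + \<delta> \<longrightarrow> L2_Rplus u \<longrightarrow> (\<forall>y>1. u y = 0) \<longrightarrow>
       (\<forall>x>0. cmod (intop (kernel2 \<nu> \<beta>) u x) \<le> C / \<nu> * L2norm u * x powr (-1 - \<delta>) \<and>
              (\<exists>D. (intop (kernel2 \<nu> \<beta>) u has_vector_derivative D) (at x) \<and>
                   cmod (x *\<^sub>R D) \<le> C * L2norm u * x powr (-1 - \<delta>)))"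
proof (intro allI impI)
  fix \<beta> :: real assume b: "\<beta> > 0"
  define C where "C = exp (\<beta>^2/4) * (3 + \<beta>^2)"
  have C0: "C > 0" unfolding C_def by (intro mult_pos_pos) (auto intro: add_pos_nonneg)
  have main: "cmod (intop (kernel2 \<nu> \<beta>) u x) \<le> C / \<nu> * L2norm u * x powr (-1-\<delta>)
     \<and> (\<exists>D. (intop (kernel2 \<nu> \<beta>) u has_vector_derivative D) (at x) \<and> cmod (x *\<^sub>R D) \<le> C * L2norm u * x powr (-1-\<delta>))"
    if nu: "3/2 + \<delta> \<le> \<nu>" and L2: "L2_Rplus u" and supp: "\<forall>y>1. u y = 0" and x: "0 < x"
    for \<nu> :: real and u :: "real \<Rightarrow> complex" and x :: real
  proof (rule op_gen[OF L2 supp x d, where dk = "dk2 \<nu> \<beta>"])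
    have nu0: "\<nu> > 0" using nu d by simp
    show "kernel2 \<nu> \<beta> s \<in> borel_measurable lborel" for s by (rule k2_meas)
    show "dk2 \<nu> \<beta> s \<in> borel_measurable lborel" for s by (rule dk2_meas)
    show "\<bar>kernel2 \<nu> \<beta> x y\<bar> \<le> C / \<nu> * x powr (- 1 - \<delta>)" if y: "0 < y" "y \<le> 1" for y
    proof -
      have "exp (\<beta>^2/4) \<le> C" unfolding C_def by (simp add: add_increasing)
      then have "exp (\<beta>^2/4) / \<nu> * x powr (-1-\<delta>) \<le> C / \<nu> * x powr (-1-\<delta>)"
        using nu0 by (intro mult_right_mono divide_right_mono) auto
      with k2_bound[OF b d nu x y] show ?thesis by simp
    qed
    show "\<bar>s * dk2 \<nu> \<beta> s y\<bar> \<le> C * s powr (- 1 - \<delta>)" if "0 < s" "0 < y" "y \<le> 1" for s y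
      using dk2_bound[OF b d nu that] by (simp add: C_def)
    show "((\<lambda>s. kernel2 \<nu> \<beta> s y) has_real_derivative dk2 \<nu> \<beta> s y) (at s)"
      if "0 < s" "0 < y" "y \<le> 1" "s \<noteq> y" for s y
      using k2_deriv[OF b nu0] that by simp
    show "continuous_on {0<..} (\<lambda>s. kernel2 \<nu> \<beta> s y)" if "0 < y" "y \<le> 1" for y
      using k2_cont[OF b nu0] that by simp
  qed
  show "\<exists>C>0. \<forall>\<nu> u. \<nu> \<ge> 3/2 + \<delta> \<longrightarrow> L2_Rplus u \<longrightarrow> (\<forall>y>1. u y = 0) \<longrightarrow>
       (\<forall>x>0. cmod (intop (kernel2 \<nu> \<beta>) u x) \<le> C / \<nu> * L2norm u * x powr (-1 - \<delta>) \<and>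
              (\<exists>D. (intop (kernel2 \<nu> \<beta>) u has_vector_derivative D) (at x) \<and>
                   cmod (x *\<^sub>R D) \<le> C * L2norm u * x powr (-1 - \<delta>)))"
    using C0 main by blast
qed

theorem corollary5p4:
  fixes \<delta> :: real
  assumes "\<delta> > 0"
  shows
   "(\<exists>C>0. \<forall>\<nu> u. \<nu> \<ge> 3/2 + \<delta> \<longrightarrow> L2_Rplus u \<longrightarrow> (\<forall>y>1. u y = 0) \<longrightarrow>
       (\<forall>x>0. cmod (intop (kernel1 \<nu>) u x) \<le> C / \<nu> * L2norm u * x powr (-1 - \<delta>) \<and>
              (\<exists>D. (intop (kernel1 \<nu>) u has_vector_derivative D) (at x) \<and>
                   cmod (x *\<^sub>R D) \<le> C * L2norm u * x powr (-1 - \<delta>)))) \<and>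
    (\<forall>\<beta>>0. \<exists>C>0. \<forall>\<nu> u. \<nu> \<ge> 3/2 + \<delta> \<longrightarrow> L2_Rplus u \<longrightarrow> (\<forall>y>1. u y = 0) \<longrightarrow>
       (\<forall>x>0. cmod (intop (kernel2 \<nu> \<beta>) u x) \<le> C / \<nu> * L2norm u * x powr (-1 - \<delta>) \<and>
              (\<exists>D. (intop (kernel2 \<nu> \<beta>) u has_vector_derivative D) (at x) \<and>
                   cmod (x *\<^sub>R D) \<le> C * L2norm u * x powr (-1 - \<delta>))))"
  using part1[OF assms] part2[OF assms] by blast

end
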